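(* Let $S_0>0$, let $0<t_1<\dots<t_n$ be maturities and, for each $i$, let $\mathcal{K}_i\subset\mathbb{R}_+$ be a finite set of strikes with given call prices $\mathcal{C}_i^K$, $K\in\mathcal{K}_i$. Define $\mathcal{M}_n$ as the set of probability measures $\mathbb{P}$ on $\mathbb{R}_+^n$ (the law of $(S_{t_1},\dots,S_{t_n})$, with $S_{t_0}:=S_0$ deterministic) such that $\mathbb{E}^{\mathbb{P}}[(S_{t_i}-K)_+]=\mathcal{C}_i^K$ for all $K\in\mathcal{K}_i$ and $\mathbb{E}^{\mathbb{P}}[S_{t_i}\mid S_0,\dots,S_{t_{i-1}}]=S_{t_{i-1}}$ for $i=1,\dots,n$. Define $\mathcal{M}_n^{\mathrm{Markov}}$ as the set of probability measures $\mathbb{P}$ on $\mathbb{R}_+^n$ satisfying the Markov property such that $\mathbb{E}^{\mathbb{P}}[(S_{t_i}-K)_+]=\mathcal{C}_i^K$ for all $K\in\mathcal{K}_i$ and $\mathbb{E}^{\mathbb{P}}[S_{t_i}\mid S_{t_{i-1}}]=S_{t_{i-1}}$ for $i=1,\dots,n$. Then $\mathcal{M}_n^{\mathrm{Markov}}$ is non-empty if and only if $\mathcal{M}_n$ is non-empty. In particular, if the market data are arbitrage-free (i.e. $\mathcal{M}_n\neq\emptyset$), they can be attained by a martingale measure in $\mathcal{M}_n^{\mathrm{Markov}}$.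
   Context: Zero interest rates and no dividends are assumed, so call prices are expectations of $(S_{t_i}-K)_+$ under a martingale measure. *)

theory Defs
  imports "HOL-Probability.Probability"
begin

text \<open>Paths: a point x of R_+^n is a function nat => real, coordinate x i = S_{t_i}
  for i in {1..n}. The deterministic initial value S_0 is prepended by Spr.\<close>

definition Spr :: "real \<Rightarrow> (nat \<Rightarrow> real) \<Rightarrow> nat \<Rightarrow> real" where
  "Spr S0 x i = (if i = 0 then S0 else x i)"

definition state_space :: "nat \<Rightarrow> (nat \<Rightarrow> real) measure" where
  "state_space n = (\<Pi>\<^sub>M i\<in>{1..n}. restrict_space borel {0::real..})"

text \<open>sigma(S_0, S_{t_1}, ..., S_{t_i}) (S_0 deterministic, so only coordinates 1..i matter).\<close>
definition past_alg :: "(nat \<Rightarrow> real) measure \<Rightarrow> nat \<Rightarrow> (nat \<Rightarrow> real) measure" where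
  "past_alg P i = vimage_algebra (space P) (\<lambda>x. restrict x {1..i}) (\<Pi>\<^sub>M j\<in>{1..i}. (borel :: real measure))"

definition curr_alg :: "real \<Rightarrow> (nat \<Rightarrow> real) measure \<Rightarrow> nat \<Rightarrow> (nat \<Rightarrow> real) measure" where
  "curr_alg S0 P i = vimage_algebra (space P) (\<lambda>x. Spr S0 x i) (borel :: real measure)"

definition calls_fit :: "nat \<Rightarrow> (nat \<Rightarrow> real set) \<Rightarrow> (nat \<Rightarrow> real \<Rightarrow> real) \<Rightarrow> (nat \<Rightarrow> real) measure \<Rightarrow> bool" where
  "calls_fit n Ks C P \<longleftrightarrow> (\<forall>i\<in>{1..n}. \<forall>K\<in>Ks i.
      integrable P (\<lambda>x. max (x i - K) 0) \<and> (\<integral>x. max (x i - K) 0 \<partial>P) = C i K)"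

definition markov_prop :: "real \<Rightarrow> nat \<Rightarrow> (nat \<Rightarrow> real) measure \<Rightarrow> bool" where
  "markov_prop S0 n P \<longleftrightarrow> (\<forall>i\<in>{1..<n}. \<forall>A\<in>sets (borel :: real measure).
      AE x in P. real_cond_exp P (past_alg P i) (\<lambda>y. indicator A (y (Suc i))) x
               = real_cond_exp P (curr_alg S0 P i) (\<lambda>y. indicator A (y (Suc i))) x)"

definition M_n :: "real \<Rightarrow> nat \<Rightarrow> (nat \<Rightarrow> real set) \<Rightarrow> (nat \<Rightarrow> real \<Rightarrow> real) \<Rightarrow> (nat \<Rightarrow> real) measure set" where
  "M_n S0 n Ks C = {P. prob_space P \<and> sets P = sets (state_space n) \<and> calls_fit n Ks C P \<and>
      (\<forall>i\<in>{1..n}. integrable P (\<lambda>x. x i) \<and>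
         (AE x in P. real_cond_exp P (past_alg P (i - 1)) (\<lambda>y. y i) x = Spr S0 x (i - 1)))}"

definition M_n_Markov :: "real \<Rightarrow> nat \<Rightarrow> (nat \<Rightarrow> real set) \<Rightarrow> (nat \<Rightarrow> real \<Rightarrow> real) \<Rightarrow> (nat \<Rightarrow> real) measure set" where
  "M_n_Markov S0 n Ks C = {P. prob_space P \<and> sets P = sets (state_space n) \<and> markov_prop S0 n P \<and>
      calls_fit n Ks C P \<and>
      (\<forall>i\<in>{1..n}. integrable P (\<lambda>x. x i) \<and>
         (AE x in P. real_cond_exp P (curr_alg S0 P (i - 1)) (\<lambda>y. y i) x = Spr S0 x (i - 1)))}"

end

theory Submission
  imports Defs
begin

lemma space_ss: "space (state_space n) = PiE {1..n} (\<lambda>_. {0::real..})"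
  by (simp add: state_space_def space_PiM)

lemma coord_meas:
  assumes "sets Q = sets (state_space n)"
  shows "(\<lambda>x. x j) \<in> borel_measurable Q"
proof (cases "j \<in> {1..n}")
  case True
  have "(\<lambda>x. x j) \<in> measurable (state_space n) (restrict_space borel {0::real..})"
    unfolding state_space_def using True by (rule measurable_component_singleton)
  then have "(\<lambda>x. x j) \<in> borel_measurable (state_space n)"
    by (simp add: measurable_restrict_space2_iff)
  then show ?thesis using measurable_cong_sets[OF assms refl] by blast
next
  case False
  have sp: "space Q = space (state_space n)" using assms by (rule sets_eq_imp_space_eq)
  have "\<forall>x\<in>space Q. x j = undefined" using False by (auto simp: sp space_ss PiE_def extensional_def)
  then show ?thesis using measurable_cong[of Q "\<lambda>x. x j" "\<lambda>_. undefined"] by simp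
qed

lemma Spr_meas:
  assumes "sets Q = sets (state_space n)"
  shows "(\<lambda>x. Spr S0 x j) \<in> borel_measurable Q"
  unfolding Spr_def using coord_meas[OF assms] by simp

lemma restr_meas:
  assumes "sets Q = sets (state_space n)"
  shows "(\<lambda>x. restrict x I) \<in> measurable Q (\<Pi>\<^sub>M j\<in>I. (borel :: real measure))"
  unfolding restrict_def using measurable_restrict[of I "\<lambda>j x. x j" Q "\<lambda>_. borel"] coord_meas[OF assms]
  by (simp add: restrict_def)

lemma subalg_vimage:
  assumes "f \<in> measurable M N"
  shows "subalgebra M (vimage_algebra (space M) f N)"
  unfolding subalgebra_def
proof
  show "space (vimage_algebra (space M) f N) = space M" by simp
  have "f \<in> space M \<rightarrow> space N" using measurable_space[OF assms] by auto 
  then show "sets (vimage_algebra (space M) f N) \<subseteq> sets M"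
    using assms by (auto simp: sets_vimage_algebra2 measurable_sets)
qed

lemma sfs_vimage:
  assumes "prob_space M" "f \<in> measurable M N"
  shows "sigma_finite_subalgebra M (vimage_algebra (space M) f N)"
proof -
  interpret prob_space M by fact
  show ?thesis
    apply (rule finite_measure_subalgebra_is_sigma_finite)
    unfolding finite_measure_subalgebra_def finite_measure_subalgebra_axioms_def
    using subalg_vimage[OF assms(2)] finite_measure_axioms by simp
qed

lemma sfs_past:
  assumes "prob_space Q" "sets Q = sets (state_space n)"
  shows "sigma_finite_subalgebra Q (past_alg Q i)"
  unfolding past_alg_def by (rule sfs_vimage[OF assms(1) restr_meas[OF assms(2)]])

lemma sfs_curr:
  assumes "prob_space Q" "sets Q = sets (state_space n)"
  shows "sigma_finite_subalgebra Q (curr_alg S0 Q i)"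
  unfolding curr_alg_def by (rule sfs_vimage[OF assms(1) Spr_meas[OF assms(2)]])

lemma past0_sets:
  assumes "A \<in> sets (past_alg Q 0)"
  shows "A = {} \<or> A = space Q"
proof -
  have "(\<lambda>x. restrict x {1..0::nat}) \<in> space Q \<rightarrow> space (\<Pi>\<^sub>M j\<in>{1..0::nat}. (borel::real measure))"
    by (auto simp: space_PiM)
  then obtain B where "A = (\<lambda>x. restrict x {1..0::nat}) -` B \<inter> space Q"
    using assms unfolding past_alg_def by (auto simp: sets_vimage_algebra2)
  moreover have "restrict x {1..0::nat} = (\<lambda>_. undefined)" for x :: "nat \<Rightarrow> real" by auto
  ultimately show ?thesis by (cases "(\<lambda>_. undefined) \<in> B") auto
qed

lemma rev_step:
  assumes Q: "prob_space Q" "sets Q = sets (state_space n)" and mk: "markov_prop S0 n Q"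
    and int: "\<forall>i\<in>{1..n}. integrable Q (\<lambda>x. x i)"
    and mc: "\<forall>i\<in>{1..n}. AE x in Q. real_cond_exp Q (curr_alg S0 Q (i-1)) (\<lambda>y. y i) x = Spr S0 x (i-1)"
    and i: "i \<in> {1..n}"
  shows "AE x in Q. real_cond_exp Q (past_alg Q (i-1)) (\<lambda>y. y i) x = Spr S0 x (i-1)"
proof -
  interpret prob_space Q by fact
  define k where "k = i - 1"
  have ik: "i = Suc k" using i k_def by auto
  interpret F: sigma_finite_subalgebra Q "past_alg Q k" by (rule sfs_past[OF Q])
  interpret Fc: sigma_finite_subalgebra Q "curr_alg S0 Q k" by (rule sfs_curr[OF Q])
  have sp: "space Q = space (state_space n)" using Q(2) by (rule sets_eq_imp_space_eq)
  have Xm[measurable]: "(\<lambda>x. x j) \<in> borel_measurable Q" for j by (rule coord_meas[OF Q(2)])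
  have Sm[measurable]: "(\<lambda>x. Spr S0 x j) \<in> borel_measurable Q" for j by (rule Spr_meas[OF Q(2)])
  have intX: "integrable Q (\<lambda>x. x i)" using int i by auto
  have intS: "integrable Q (\<lambda>x. Spr S0 x k)"
  proof (cases "k = 0")
    case True then show ?thesis by (simp add: Spr_def)
  next
    case False
    then have "k \<in> {1..n}" using i k_def by auto
    then show ?thesis using int False by (simp add: Spr_def)
  qed
  have mck: "AE x in Q. real_cond_exp Q (curr_alg S0 Q k) (\<lambda>y. y i) x = Spr S0 x k"
    using mc i k_def by auto
  have SF: "(\<lambda>x. Spr S0 x k) \<in> borel_measurable (past_alg Q k)"
  proof (cases "k = 0")
    case True then show ?thesis by (simp add: Spr_def)
  next
    case False
    have r: "(\<lambda>x. restrict x {1..k}) \<in> space Q \<rightarrow> space (\<Pi>\<^sub>M j\<in>{1..k}. (borel::real measure))"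
      by (auto simp: space_PiM)
    have "(\<lambda>x. (restrict x {1..k}) k) \<in> borel_measurable (past_alg Q k)"
      unfolding past_alg_def
      using measurable_compose[OF measurable_vimage_algebra1[OF r] measurable_component_singleton[of k "{1..k}" "\<lambda>_. borel"]]
        False by simp
    then show ?thesis using False by (simp add: Spr_def)
  qed
  have SFc: "(\<lambda>x. Spr S0 x k) \<in> borel_measurable (curr_alg S0 Q k)"
    unfolding curr_alg_def by (rule measurable_vimage_algebra1) auto
  have key: "(\<integral>x\<in>A. x i \<partial>Q) = (\<integral>x\<in>A. Spr S0 x k \<partial>Q)" if A: "A \<in> sets (past_alg Q k)" for A
  proof (cases "k = 0")
    case True
    have "A = {} \<or> A = space Q" using past0_sets A True by blast
    moreover have "(\<integral>x\<in>space Q. x i \<partial>Q) = (\<integral>x\<in>space Q. Spr S0 x k \<partial>Q)"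
    proof -
      have "(\<integral>x\<in>space Q. x i \<partial>Q) = (\<integral>x. x i \<partial>Q)"
        unfolding set_lebesgue_integral_def by (rule Bochner_Integration.integral_cong) auto
      also have "\<dots> = (\<integral>x. real_cond_exp Q (curr_alg S0 Q k) (\<lambda>y. y i) x \<partial>Q)"
        using Fc.real_cond_exp_int(2)[OF intX] by simp
      also have "\<dots> = (\<integral>x. Spr S0 x k \<partial>Q)" by (rule integral_cong_AE) (use mck in auto)
      also have "\<dots> = (\<integral>x\<in>space Q. Spr S0 x k \<partial>Q)"
        unfolding set_lebesgue_integral_def by (rule Bochner_Integration.integral_cong) auto
      finally show ?thesis .
    qed
    ultimately show ?thesis by (auto simp: set_lebesgue_integral_def)
  next
    case False
    have kn: "k \<in> {1..<n}" using False i k_def by auto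
    have AQ[measurable]: "A \<in> sets Q" using F.subalg A unfolding subalgebra_def by auto
    have AF: "indicator A \<in> borel_measurable (past_alg Q k)" using A by simp
    define w where "w = real_cond_exp Q (curr_alg S0 Q k) (indicator A)"
    have wm[measurable]: "w \<in> borel_measurable Q" unfolding w_def by simp
    have wFc: "w \<in> borel_measurable (curr_alg S0 Q k)" unfolding w_def by simp
    have intA: "integrable Q (indicator A :: _ \<Rightarrow> real)"
      by (rule integrable_const_bound[where B=1]) (auto simp: indicator_def)
    have intw: "integrable Q w" unfolding w_def by (rule Fc.real_cond_exp_int(1)[OF intA])
    have w0: "AE x in Q. 0 \<le> w x" unfolding w_def by (rule Fc.real_cond_exp_pos) auto
    have w1: "AE x in Q. w x \<le> 1" unfolding w_def by (rule Fc.real_cond_exp_le_c) (auto simp: intA)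
    have step1: "(\<integral>x. indicator A x * indicator B (x i) \<partial>Q) = (\<integral>x. w x * indicator B (x i) \<partial>Q)"
      if B[measurable]: "B \<in> sets borel" for B :: "real set"
    proof -
      define gB where "gB = (\<lambda>x::nat\<Rightarrow>real. indicator B (x i) :: real)"
      have gBm[measurable]: "gB \<in> borel_measurable Q" unfolding gB_def by simp
      have intgB: "integrable Q gB"
        by (rule integrable_const_bound[where B=1]) (auto simp: gB_def indicator_def)
      have mkA: "AE x in Q. real_cond_exp Q (past_alg Q k) gB x = real_cond_exp Q (curr_alg S0 Q k) gB x"
        using mk kn B unfolding markov_prop_def gB_def ik by auto
      have "(\<integral>x. indicator A x * gB x \<partial>Q) = (\<integral>x. indicator A x * real_cond_exp Q (past_alg Q k) gB x \<partial>Q)"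
        by (rule F.real_cond_exp_intg(2)[symmetric])
          (use integrable_mult_indicator[OF AQ intgB] AF in auto)
      also have "\<dots> = (\<integral>x. real_cond_exp Q (curr_alg S0 Q k) gB x * indicator A x \<partial>Q)"
        by (rule integral_cong_AE) (use mkA in auto)
      also have "\<dots> = (\<integral>x. real_cond_exp Q (curr_alg S0 Q k) gB x * w x \<partial>Q)"
        unfolding w_def
        by (rule Fc.real_cond_exp_intg(2)[symmetric])
          (use integrable_mult_indicator[OF AQ Fc.real_cond_exp_int(1)[OF intgB]] in \<open>auto simp: mult.commute\<close>)
      also have "\<dots> = (\<integral>x. w x * real_cond_exp Q (curr_alg S0 Q k) gB x \<partial>Q)"
        by (simp add: mult.commute)
      also have "\<dots> = (\<integral>x. w x * gB x \<partial>Q)"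
      proof (rule Fc.real_cond_exp_intg(2))
        show "integrable Q (\<lambda>x. w x * gB x)"
          by (rule Bochner_Integration.integrable_bound[OF intw]) (auto simp: gB_def indicator_def)
      qed (auto simp: wFc)
      finally show ?thesis by (simp add: gB_def)
    qed
    define m1 where "m1 = distr (density Q (\<lambda>x. ennreal (indicator A x))) borel (\<lambda>x. x i)"
    define m2 where "m2 = distr (density Q (\<lambda>x. ennreal (w x))) borel (\<lambda>x. x i)"
    have m12: "m1 = m2"
    proof (rule measure_eqI)
      show "sets m1 = sets m2" by (simp add: m1_def m2_def)
      fix B assume "B \<in> sets m1"
      then have B[measurable]: "B \<in> sets borel" by (simp add: m1_def)
      have e1: "emeasure m1 B = ennreal (\<integral>x. indicator A x * indicator B (x i) \<partial>Q)"
      proof -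
        have "emeasure m1 B = (\<integral>\<^sup>+x. ennreal (indicator A x) * indicator ((\<lambda>x. x i) -` B \<inter> space Q) x \<partial>Q)"
          unfolding m1_def by (simp add: emeasure_distr emeasure_density)
        also have "\<dots> = (\<integral>\<^sup>+x. ennreal (indicator A x * indicator B (x i)) \<partial>Q)"
          by (rule nn_integral_cong) (auto simp: indicator_def)
        also have "\<dots> = ennreal (\<integral>x. indicator A x * indicator B (x i) \<partial>Q)"
          by (rule nn_integral_eq_integral)
            (auto intro!: integrable_const_bound[where B=1] simp: indicator_def)
        finally show ?thesis .
      qed
      have e2: "emeasure m2 B = ennreal (\<integral>x. w x * indicator B (x i) \<partial>Q)"
      proof -
        have "emeasure m2 B = (\<integral>\<^sup>+x. ennreal (w x) * indicator ((\<lambda>x. x i) -` B \<inter> space Q) x \<partial>Q)"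
          unfolding m2_def by (simp add: emeasure_distr emeasure_density)
        also have "\<dots> = (\<integral>\<^sup>+x. ennreal (w x * indicator B (x i)) \<partial>Q)"
          by (rule nn_integral_cong) (auto simp: indicator_def)
        also have "\<dots> = ennreal (\<integral>x. w x * indicator B (x i) \<partial>Q)"
        proof (rule nn_integral_eq_integral)
          show "integrable Q (\<lambda>x. w x * indicator B (x i))"
            by (rule Bochner_Integration.integrable_bound[OF intw]) (auto simp: indicator_def)
          show "AE x in Q. 0 \<le> w x * indicator B (x i)" using w0 by eventually_elim auto
        qed
        finally show ?thesis .
      qed
      show "emeasure m1 B = emeasure m2 B" using e1 e2 step1[OF B] by simp
    qed
    have "(\<integral>x. indicator A x * x i \<partial>Q) = (\<integral>y. y \<partial>m1)"
      unfolding m1_def by (simp add: integral_distr integral_density)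
    also have "\<dots> = (\<integral>y. y \<partial>m2)" by (simp add: m12)
    also have "\<dots> = (\<integral>x. w x * x i \<partial>Q)"
      unfolding m2_def by (simp add: integral_distr integral_density w0)
    also have "\<dots> = (\<integral>x. w x * real_cond_exp Q (curr_alg S0 Q k) (\<lambda>y. y i) x \<partial>Q)"
    proof (rule Fc.real_cond_exp_intg(2)[symmetric])
      show "integrable Q (\<lambda>x. w x * x i)"
        by (rule Bochner_Integration.integrable_bound[OF intX])
          (use w0 w1 in \<open>auto simp: abs_mult intro!: mult_left_le_one_le\<close>)
    qed (auto simp: wFc)
    also have "\<dots> = (\<integral>x. w x * Spr S0 x k \<partial>Q)"
      by (rule integral_cong_AE) (use mck in auto)
    also have "\<dots> = (\<integral>x. Spr S0 x k * w x \<partial>Q)" by (simp add: mult.commute)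
    also have "\<dots> = (\<integral>x. Spr S0 x k * indicator A x \<partial>Q)"
      unfolding w_def
      by (rule Fc.real_cond_exp_intg(2))
        (use integrable_mult_indicator[OF AQ intS] SFc in \<open>auto simp: mult.commute\<close>)
    finally show ?thesis by (simp add: set_lebesgue_integral_def mult.commute)
  qed
  have "AE x in Q. real_cond_exp Q (past_alg Q k) (\<lambda>y. y i) x = Spr S0 x k"
    by (rule F.real_cond_exp_charact) (use key intX intS SF in auto)
  then show ?thesis by (simp add: k_def)
qed


lemma markov_to_mn: "Q \<in> M_n_Markov S0 n Ks C \<Longrightarrow> Q \<in> M_n S0 n Ks C"
  unfolding M_n_Markov_def M_n_def using rev_step[of Q n S0] by auto

lemma intQ:
  fixes p :: "'a pmf"
  assumes fin: "finite (set_pmf p)" and fx: "fx \<in> UNIV \<rightarrow> space M" "\<And>\<sigma>. \<sigma> \<in> set_pmf p \<Longrightarrow> fx \<sigma> = \<sigma>"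
    and f: "f \<in> borel_measurable M"
  shows "integrable (distr (measure_pmf p) M fx) f"
    "(\<integral>x. f x \<partial>distr (measure_pmf p) M fx) = (\<Sum>\<sigma>\<in>set_pmf p. pmf p \<sigma> * f \<sigma>)"
proof -
  have fxm: "fx \<in> measurable (measure_pmf p) M" using fx by simp
  show "integrable (distr (measure_pmf p) M fx) f"
    using integrable_distr_eq[OF fxm f] integrable_measure_pmf_finite[OF fin] by simp
  have "(\<integral>x. f x \<partial>distr (measure_pmf p) M fx) = (\<integral>\<sigma>. f (fx \<sigma>) \<partial>measure_pmf p)"
    by (rule integral_distr[OF fxm f])
  also have "\<dots> = (\<Sum>\<sigma>\<in>set_pmf p. f (fx \<sigma>) * pmf p \<sigma>)"
    by (rule integral_measure_pmf_real) (auto simp: fin)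
  also have "\<dots> = (\<Sum>\<sigma>\<in>set_pmf p. pmf p \<sigma> * f \<sigma>)"
    by (rule sum.cong) (auto simp: fx(2))
  finally show "(\<integral>x. f x \<partial>distr (measure_pmf p) M fx) = (\<Sum>\<sigma>\<in>set_pmf p. pmf p \<sigma> * f \<sigma>)" .
qed

lemma AE_Q:
  fixes p :: "'a pmf"
  assumes fin: "finite (set_pmf p)" and fx: "fx \<in> UNIV \<rightarrow> space M" "\<And>\<sigma>. \<sigma> \<in> set_pmf p \<Longrightarrow> fx \<sigma> = \<sigma>"
    and sing: "\<And>\<sigma>. \<sigma> \<in> set_pmf p \<Longrightarrow> {\<sigma>} \<in> sets M"
    and P: "\<And>\<sigma>. \<sigma> \<in> set_pmf p \<Longrightarrow> P \<sigma>"
  shows "AE x in distr (measure_pmf p) M fx. P x"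
proof (rule AE_I')
  have fxm: "fx \<in> measurable (measure_pmf p) M" using fx by simp
  have SM: "set_pmf p \<in> sets M"
  proof -
    have "set_pmf p = (\<Union>\<sigma>\<in>set_pmf p. {\<sigma>})" by auto
    also have "\<dots> \<in> sets M" using fin sing by (intro sets.finite_UN) auto
    finally show ?thesis .
  qed
  let ?N = "space M - set_pmf p"
  have Nm: "?N \<in> sets M" using SM by auto
  have "emeasure (distr (measure_pmf p) M fx) ?N = emeasure (measure_pmf p) (fx -` ?N \<inter> UNIV)"
    using emeasure_distr[OF fxm Nm] by simp
  also have "\<dots> = 0"
  proof -
    have "set_pmf p \<inter> (fx -` ?N) = {}" using fx(2) by auto
    then have "measure (measure_pmf p) (fx -` ?N) = 0" by (simp add: measure_pmf_zero_iff)
    then show ?thesis by (simp add: measure_pmf.emeasure_eq_measure)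
  qed
  finally show "?N \<in> null_sets (distr (measure_pmf p) M fx)" using Nm by auto
  show "{x \<in> space (distr (measure_pmf p) M fx). \<not> P x} \<subseteq> ?N" using P by auto
qed

lemma L1:
  fixes p :: "'a pmf" and \<phi> :: "'a \<Rightarrow> 'b" and g :: "'a \<Rightarrow> real"
  assumes fin: "finite (set_pmf p)" and fx: "fx \<in> UNIV \<rightarrow> space M" "\<And>\<sigma>. \<sigma> \<in> set_pmf p \<Longrightarrow> fx \<sigma> = \<sigma>"
    and sing: "\<And>\<sigma>. \<sigma> \<in> set_pmf p \<Longrightarrow> {\<sigma>} \<in> sets M"
    and phi: "\<phi> \<in> measurable M N" "\<And>\<sigma>. \<sigma> \<in> set_pmf p \<Longrightarrow> {\<phi> \<sigma>} \<in> sets N"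
    and g[measurable]: "g \<in> borel_measurable M"
  shows "AE x in distr (measure_pmf p) M fx.
     real_cond_exp (distr (measure_pmf p) M fx) (vimage_algebra (space (distr (measure_pmf p) M fx)) \<phi> N) g x
     = (\<Sum>\<sigma>\<in>{\<sigma>\<in>set_pmf p. \<phi> \<sigma> = \<phi> x}. pmf p \<sigma> * g \<sigma>) / (\<Sum>\<sigma>\<in>{\<sigma>\<in>set_pmf p. \<phi> \<sigma> = \<phi> x}. pmf p \<sigma>)"
proof -
  define Q where "Q = distr (measure_pmf p) M fx"
  define S where "S = set_pmf p"
  have fxm: "fx \<in> measurable (measure_pmf p) M" using fx by simp
  have QP: "prob_space Q" unfolding Q_def by (rule measure_pmf.prob_space_distr[OF fxm])
  have spQ: "space Q = space M" by (simp add: Q_def)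
  have sQ: "sets Q = sets M" by (simp add: Q_def)
  have phiQ: "\<phi> \<in> measurable Q N" using phi(1) measurable_cong_sets[OF sQ refl] by blast
  define F where "F = vimage_algebra (space Q) \<phi> N"
  interpret sigma_finite_subalgebra Q F unfolding F_def by (rule sfs_vimage[OF QP phiQ])
  have SM: "S \<subseteq> space M"
  proof
    fix \<sigma> assume "\<sigma> \<in> S"
    then have "fx \<sigma> = \<sigma>" using fx(2) by (simp add: S_def)
    moreover have "fx \<sigma> \<in> space M" using fx(1) by auto
    ultimately show "\<sigma> \<in> space M" by simp
  qed
  define den where "den z = (\<Sum>\<sigma>\<in>{\<sigma>\<in>S. \<phi> \<sigma> = z}. pmf p \<sigma>)" for z
  define num where "num z = (\<Sum>\<sigma>\<in>{\<sigma>\<in>S. \<phi> \<sigma> = z}. pmf p \<sigma> * g \<sigma>)" for z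
  define \<psi> where "\<psi> z = num z / den z" for z
  have finS: "finite S" using fin by (simp add: S_def)
  have denpos: "den z > 0" if z: "z \<in> \<phi> ` S" for z
  proof -
    obtain \<sigma> where \<sigma>: "\<sigma> \<in> S" "\<phi> \<sigma> = z" using z by auto
    have "pmf p \<sigma> \<le> den z" unfolding den_def
      by (rule member_le_sum) (use \<sigma> finS in auto)
    moreover have "pmf p \<sigma> > 0" using \<sigma> by (simp add: S_def pmf_positive)
    ultimately show ?thesis by simp
  qed
  define h where "h x = (\<Sum>z\<in>\<phi> ` S. indicator (\<phi> -` {z} \<inter> space Q) x * \<psi> z)" for x
  have hS: "h \<sigma> = \<psi> (\<phi> \<sigma>)" if "\<sigma> \<in> S" for \<sigma>
  proof -
    have "h \<sigma> = (\<Sum>z\<in>\<phi> ` S. (if z = \<phi> \<sigma> then \<psi> z else 0))"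
      unfolding h_def by (rule sum.cong) (use that SM spQ in \<open>auto simp: indicator_def\<close>)
    also have "\<dots> = \<psi> (\<phi> \<sigma>)" using that finS by (simp add: sum.delta')
    finally show ?thesis .
  qed
  have setsF: "\<phi> -` {z} \<inter> space Q \<in> sets F" if "z \<in> \<phi> ` S" for z
    unfolding F_def by (rule in_vimage_algebra) (use that phi(2) in \<open>auto simp: S_def\<close>)
  have hF: "h \<in> borel_measurable F"
    unfolding h_def
    by (rule borel_measurable_sum) (use setsF in \<open>auto intro!: borel_measurable_times borel_measurable_indicator\<close>)
  have hM: "h \<in> borel_measurable M"
    using measurable_from_subalg[OF subalg hF] measurable_cong_sets[OF sQ refl] by blast
  have intg: "integrable Q f" if "f \<in> borel_measurable M" for f :: "'a \<Rightarrow> real"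
    unfolding Q_def using intQ(1)[OF fin fx(1) _ that] fx(2) by blast
  have intf: "(\<integral>x. f x \<partial>Q) = (\<Sum>\<sigma>\<in>S. pmf p \<sigma> * f \<sigma>)" if "f \<in> borel_measurable M" for f :: "'a \<Rightarrow> real"
    unfolding Q_def S_def using intQ(2)[OF fin fx(1) _ that] fx(2) by blast
  have grp: "(\<Sum>\<sigma>\<in>S. pmf p \<sigma> * (indicator B (\<phi> \<sigma>) * \<psi> (\<phi> \<sigma>)))
           = (\<Sum>\<sigma>\<in>S. pmf p \<sigma> * (indicator B (\<phi> \<sigma>) * g \<sigma>))" for B
  proof -
    have "(\<Sum>\<sigma>\<in>S. pmf p \<sigma> * (indicator B (\<phi> \<sigma>) * \<psi> (\<phi> \<sigma>)))
        = (\<Sum>z\<in>\<phi> ` S. \<Sum>\<sigma>\<in>{\<sigma>\<in>S. \<phi> \<sigma> = z}. pmf p \<sigma> * (indicator B (\<phi> \<sigma>) * \<psi> (\<phi> \<sigma>)))"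
      by (rule sum.image_gen[OF finS])
    also have "\<dots> = (\<Sum>z\<in>\<phi> ` S. indicator B z * \<psi> z * den z)"
      by (rule sum.cong) (auto simp: den_def sum_distrib_left sum_distrib_right intro!: sum.cong)
    also have "\<dots> = (\<Sum>z\<in>\<phi> ` S. indicator B z * num z)"
    proof (rule sum.cong)
      fix z assume "z \<in> \<phi> ` S"
      then have "den z > 0" by (rule denpos)
      then show "indicator B z * \<psi> z * den z = indicator B z * num z" by (simp add: \<psi>_def)
    qed simp
    also have "\<dots> = (\<Sum>z\<in>\<phi> ` S. \<Sum>\<sigma>\<in>{\<sigma>\<in>S. \<phi> \<sigma> = z}. pmf p \<sigma> * (indicator B (\<phi> \<sigma>) * g \<sigma>))"
      by (rule sum.cong) (auto simp: num_def sum_distrib_left intro!: sum.cong)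
    also have "\<dots> = (\<Sum>\<sigma>\<in>S. pmf p \<sigma> * (indicator B (\<phi> \<sigma>) * g \<sigma>))"
      by (rule sum.image_gen[OF finS, symmetric])
    finally show ?thesis .
  qed
  have ch: "AE x in Q. real_cond_exp Q F g x = h x"
  proof (rule real_cond_exp_charact)
    fix A assume A: "A \<in> sets F"
    have "\<phi> \<in> space Q \<rightarrow> space N" using measurable_space[OF phiQ] by auto
    then obtain B where B: "B \<in> sets N" "A = \<phi> -` B \<inter> space Q"
      using A unfolding F_def by (auto simp: sets_vimage_algebra2)
    have AM: "A \<in> sets M" using A subalg sQ unfolding subalgebra_def by auto
    have iA: "indicator A \<sigma> = indicator B (\<phi> \<sigma>)" if "\<sigma> \<in> S" for \<sigma> :: 'a
      using that SM spQ B(2) by (auto simp: indicator_def)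
    have "(\<integral>x\<in>A. g x \<partial>Q) = (\<Sum>\<sigma>\<in>S. pmf p \<sigma> * (indicator A \<sigma> * g \<sigma>))"
      unfolding set_lebesgue_integral_def using AM by (simp add: intf)
    also have "\<dots> = (\<Sum>\<sigma>\<in>S. pmf p \<sigma> * (indicator B (\<phi> \<sigma>) * g \<sigma>))"
      by (rule sum.cong) (auto simp: iA)
    also have "\<dots> = (\<Sum>\<sigma>\<in>S. pmf p \<sigma> * (indicator B (\<phi> \<sigma>) * \<psi> (\<phi> \<sigma>)))" by (rule grp[symmetric])
    also have "\<dots> = (\<Sum>\<sigma>\<in>S. pmf p \<sigma> * (indicator A \<sigma> * h \<sigma>))"
      by (rule sum.cong) (auto simp: iA hS)
    also have "\<dots> = (\<integral>x\<in>A. h x \<partial>Q)"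
      unfolding set_lebesgue_integral_def using AM hM by (simp add: intf)
    finally show "(\<integral>x\<in>A. g x \<partial>Q) = (\<integral>x\<in>A. h x \<partial>Q)" .
  next
    show "integrable Q g" by (rule intg) simp
    show "integrable Q h" by (rule intg[OF hM])
    show "h \<in> borel_measurable F" by (rule hF)
  qed
  have "AE x in Q. h x = \<psi> (\<phi> x)"
    unfolding Q_def by (rule AE_Q[OF fin fx(1)]) (auto simp: hS S_def fx(2) sing)
  with ch show ?thesis
    unfolding Q_def[symmetric] F_def[symmetric] by eventually_elim (simp add: \<psi>_def num_def den_def S_def)
qed

fun path :: "(nat \<Rightarrow> real \<Rightarrow> real pmf) \<Rightarrow> real \<Rightarrow> nat \<Rightarrow> (nat \<Rightarrow> real) pmf" where
  "path T S0 0 = return_pmf (\<lambda>_. undefined)"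
| "path T S0 (Suc k) = bind_pmf (path T S0 k) (\<lambda>\<sigma>. map_pmf (\<lambda>y. \<sigma>(Suc k := y)) (T (Suc k) (Spr S0 \<sigma> k)))"

lemma path_supp:
  "\<sigma> \<in> set_pmf (path T S0 k) \<Longrightarrow> (\<forall>j. j \<notin> {1..k} \<longrightarrow> \<sigma> j = undefined) \<and>
      (\<forall>j\<in>{1..k}. \<sigma> j \<in> set_pmf (T j (Spr S0 \<sigma> (j-1))))"
proof (induction k arbitrary: \<sigma>)
  case 0 then show ?case by auto
next
  case (Suc k)
  then obtain \<tau> y where \<tau>: "\<tau> \<in> set_pmf (path T S0 k)" and y: "y \<in> set_pmf (T (Suc k) (Spr S0 \<tau> k))"
    and \<sigma>: "\<sigma> = \<tau>(Suc k := y)" by auto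
  note IH = Suc.IH[OF \<tau>]
  have Spr_eq: "Spr S0 \<sigma> (j-1) = Spr S0 \<tau> (j-1)" if "j \<le> Suc k" for j
    using that \<sigma> by (auto simp: Spr_def)
  show ?case
  proof (intro conjI allI ballI impI)
    fix j assume "j \<notin> {1..Suc k}" then show "\<sigma> j = undefined" using IH \<sigma> by auto
  next
    fix j assume j: "j \<in> {1..Suc k}"
    show "\<sigma> j \<in> set_pmf (T j (Spr S0 \<sigma> (j-1)))"
    proof (cases "j = Suc k")
      case True then show ?thesis using y \<sigma> Spr_eq[of j] by simp
    next
      case False
      then have "j \<in> {1..k}" using j by auto
      then show ?thesis using IH \<sigma> Spr_eq[of j] False j by auto
    qed
  qed
qed

lemma path_fin:
  assumes "\<And>j y. finite (set_pmf (T j y))"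
  shows "finite (set_pmf (path T S0 k))"
  by (induction k) (auto simp: assms)

lemma path_base: "map_pmf (\<lambda>\<sigma>. restrict \<sigma> {1..k}) (path T S0 k) = path T S0 k"
proof (rule map_pmf_idI)
  fix \<sigma> assume "\<sigma> \<in> set_pmf (path T S0 k)"
  from path_supp[OF this] show "restrict \<sigma> {1..k} = \<sigma>"
    by (auto simp: restrict_def fun_eq_iff)
qed

lemma path_prefix:
  assumes "k \<le> m"
  shows "map_pmf (\<lambda>\<sigma>. restrict \<sigma> {1..k}) (path T S0 m) = path T S0 k"
  using assms
proof (induction rule: dec_induct)
  case base
  then show ?case by (rule path_base)
next
  case (step m)
  have "map_pmf (\<lambda>\<sigma>. restrict \<sigma> {1..k}) (path T S0 (Suc m))
      = bind_pmf (path T S0 m) (\<lambda>\<sigma>. map_pmf (\<lambda>y. restrict (\<sigma>(Suc m := y)) {1..k}) (T (Suc m) (Spr S0 \<sigma> m)))"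
    by (simp add: map_bind_pmf map_pmf_comp)
  also have "\<dots> = bind_pmf (path T S0 m) (\<lambda>\<sigma>. map_pmf (\<lambda>_. restrict \<sigma> {1..k}) (T (Suc m) (Spr S0 \<sigma> m)))"
    by (intro bind_pmf_cong refl map_pmf_cong) (use step in \<open>auto simp: restrict_def fun_eq_iff\<close>)
  also have "\<dots> = map_pmf (\<lambda>\<sigma>. restrict \<sigma> {1..k}) (path T S0 m)"
    by (simp add: map_pmf_def)
  also have "\<dots> = path T S0 k" by (rule step.IH)
  finally show ?case .
qed

lemma exp_bind:
  fixes h :: "'b \<Rightarrow> real"
  assumes "finite (set_pmf p)" "\<And>x. x \<in> set_pmf p \<Longrightarrow> finite (set_pmf (f x))"
  shows "measure_pmf.expectation (bind_pmf p f) h = measure_pmf.expectation p (\<lambda>x. measure_pmf.expectation (f x) h)"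
proof -
  have "measure_pmf.expectation (bind_pmf p f) h = (\<Sum>a\<in>set_pmf p. pmf p a *\<^sub>R measure_pmf.expectation (f a) h)"
    by (rule pmf_expectation_bind) (use assms in auto)
  also have "\<dots> = measure_pmf.expectation p (\<lambda>x. measure_pmf.expectation (f x) h)"
    by (subst integral_measure_pmf_real[of "set_pmf p"]) (use assms in \<open>auto simp: mult.commute\<close>)
  finally show ?thesis .
qed

lemma exp_prefix:
  fixes H :: "(nat \<Rightarrow> real) \<Rightarrow> real"
  assumes "k \<le> m"
  shows "measure_pmf.expectation (path T S0 m) (\<lambda>\<sigma>. H (restrict \<sigma> {1..k})) = measure_pmf.expectation (path T S0 k) H"
proof -
  have "measure_pmf.expectation (path T S0 m) (\<lambda>\<sigma>. H (restrict \<sigma> {1..k}))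
     = measure_pmf.expectation (map_pmf (\<lambda>\<sigma>. restrict \<sigma> {1..k}) (path T S0 m)) H" by simp
  also have "\<dots> = measure_pmf.expectation (path T S0 k) H" by (simp only: path_prefix[OF assms])
  finally show ?thesis .
qed

lemma Spr_restrict: "Spr S0 (restrict \<sigma> {1..i}) i = Spr S0 \<sigma> i"
  by (simp add: Spr_def)

lemma Spr_restrict': "Spr S0 (restrict \<sigma> {Suc 0..i}) i = Spr S0 \<sigma> i"
  by (simp add: Spr_def)

lemma path_trans:
  fixes F :: "(nat \<Rightarrow> real) \<Rightarrow> real" and G :: "real \<Rightarrow> real"
  assumes fin: "\<And>j y. finite (set_pmf (T j y))" and im: "i < m"
  shows "measure_pmf.expectation (path T S0 m) (\<lambda>\<sigma>. F (restrict \<sigma> {1..i}) * G (\<sigma> (Suc i)))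
       = measure_pmf.expectation (path T S0 m) (\<lambda>\<sigma>. F (restrict \<sigma> {1..i}) * measure_pmf.expectation (T (Suc i) (Spr S0 \<sigma> i)) G)"
proof -
  define H where "H \<tau> = F (restrict \<tau> {1..i}) * G (\<tau> (Suc i))" for \<tau> :: "nat \<Rightarrow> real"
  define H' where "H' \<tau> = F (restrict \<tau> {1..i}) * measure_pmf.expectation (T (Suc i) (Spr S0 \<tau> i)) G" for \<tau> :: "nat \<Rightarrow> real"
  have "measure_pmf.expectation (path T S0 m) (\<lambda>\<sigma>. F (restrict \<sigma> {1..i}) * G (\<sigma> (Suc i)))
      = measure_pmf.expectation (path T S0 m) (\<lambda>\<sigma>. H (restrict \<sigma> {1..Suc i}))"
    by (simp add: H_def Int_absorb2)
  also have "\<dots> = measure_pmf.expectation (path T S0 (Suc i)) H"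
    by (rule exp_prefix) (use im in auto)
  also have "\<dots> = measure_pmf.expectation (path T S0 i)
       (\<lambda>\<sigma>. measure_pmf.expectation (map_pmf (\<lambda>y. \<sigma>(Suc i := y)) (T (Suc i) (Spr S0 \<sigma> i))) H)"
    by (simp only: path.simps, rule exp_bind) (auto simp: path_fin fin)
  also have "\<dots> = measure_pmf.expectation (path T S0 i) H'"
  proof -
    have "\<And>\<sigma>. measure_pmf.expectation (map_pmf (\<lambda>y. \<sigma>(Suc i := y)) (T (Suc i) (Spr S0 \<sigma> i))) H = H' \<sigma>"
    proof -
      fix \<sigma> :: "nat \<Rightarrow> real"
      have r: "restrict (\<sigma>(Suc i := y)) {1..i} = restrict \<sigma> {1..i}" for y
        by (auto simp: restrict_def fun_eq_iff)
      show "measure_pmf.expectation (map_pmf (\<lambda>y. \<sigma>(Suc i := y)) (T (Suc i) (Spr S0 \<sigma> i))) H = H' \<sigma>"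
        by (simp add: H_def H'_def r)
    qed
    then show ?thesis by simp
  qed
  also have "\<dots> = measure_pmf.expectation (path T S0 m) (\<lambda>\<sigma>. H' (restrict \<sigma> {1..i}))"
    by (rule exp_prefix[symmetric]) (use im in auto)
  also have "\<dots> = measure_pmf.expectation (path T S0 m) (\<lambda>\<sigma>. F (restrict \<sigma> {1..i}) * measure_pmf.expectation (T (Suc i) (Spr S0 \<sigma> i)) G)"
    by (simp add: H'_def Spr_restrict')
  finally show ?thesis .
qed

lemma path_marg0:
  assumes nu0: "\<nu> 0 = return_pmf S0"
    and chain: "\<And>j. Suc j \<le> n \<Longrightarrow> bind_pmf (\<nu> j) (T (Suc j)) = \<nu> (Suc j)"
    and "i \<le> n"
  shows "map_pmf (\<lambda>\<sigma>. Spr S0 \<sigma> i) (path T S0 i) = \<nu> i"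
  using assms(3)
proof (induction i)
  case 0 then show ?case by (simp add: nu0 Spr_def)
next
  case (Suc i)
  have "map_pmf (\<lambda>\<sigma>. Spr S0 \<sigma> (Suc i)) (path T S0 (Suc i))
      = bind_pmf (path T S0 i) (\<lambda>\<sigma>. T (Suc i) (Spr S0 \<sigma> i))"
    by (simp add: map_bind_pmf map_pmf_comp Spr_def)
  also have "\<dots> = bind_pmf (map_pmf (\<lambda>\<sigma>. Spr S0 \<sigma> i) (path T S0 i)) (T (Suc i))"
    by (simp add: bind_map_pmf)
  also have "\<dots> = \<nu> (Suc i)" using Suc by (simp add: chain)
  finally show ?case .
qed

lemma path_marg:
  assumes nu0: "\<nu> 0 = return_pmf S0"
    and chain: "\<And>j. Suc j \<le> n \<Longrightarrow> bind_pmf (\<nu> j) (T (Suc j)) = \<nu> (Suc j)"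
    and "i \<le> m" "m \<le> n"
  shows "map_pmf (\<lambda>\<sigma>. Spr S0 \<sigma> i) (path T S0 m) = \<nu> i"
proof -
  have "map_pmf (\<lambda>\<sigma>. Spr S0 \<sigma> i) (path T S0 m)
      = map_pmf (\<lambda>\<sigma>. Spr S0 \<sigma> i) (map_pmf (\<lambda>\<sigma>. restrict \<sigma> {1..i}) (path T S0 m))"
    by (simp add: map_pmf_comp Spr_restrict')
  also have "\<dots> = map_pmf (\<lambda>\<sigma>. Spr S0 \<sigma> i) (path T S0 i)" using path_prefix[OF assms(3)] by simp
  also have "\<dots> = \<nu> i" by (rule path_marg0[OF nu0 chain]) (use assms in auto)
  finally show ?thesis .
qed

lemma D0:
  fixes Z :: "'a \<Rightarrow> 'b" and f :: "'b \<Rightarrow> real"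
  assumes M: "finite_measure M" and fin: "finite (Z ` space M)"
    and lev: "\<And>z. {x\<in>space M. Z x = z} \<in> sets M" and B: "B \<in> sets M"
  shows "(\<integral>x. indicator B x * f (Z x) \<partial>M) = (\<Sum>z\<in>Z ` space M. f z * measure M {x\<in>space M. x \<in> B \<and> Z x = z})"
proof -
  interpret finite_measure M by fact
  have lev2: "{x\<in>space M. x \<in> B \<and> Z x = z} \<in> sets M" for z
  proof -
    have "{x\<in>space M. x \<in> B \<and> Z x = z} = B \<inter> {x\<in>space M. Z x = z}" by auto
    then show ?thesis using B lev by simp
  qed
  have intI: "integrable M (indicator S :: _ \<Rightarrow> real)" if "S \<in> sets M" for S
    by (rule integrable_const_bound[where B=1]) (use that in auto)
  have pw: "indicator B x * f (Z x) = (\<Sum>z\<in>Z ` space M. f z * indicator {x\<in>space M. x \<in> B \<and> Z x = z} x)"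
    if x: "x \<in> space M" for x
  proof -
    have "(\<Sum>z\<in>Z ` space M. f z * indicator {x\<in>space M. x \<in> B \<and> Z x = z} x)
        = (\<Sum>z\<in>Z ` space M. (if z = Z x then f z * indicator B x else 0))"
      by (rule sum.cong) (use x in \<open>auto simp: indicator_def\<close>)
    also have "\<dots> = f (Z x) * indicator B x" using fin x by (simp add: sum.delta')
    finally show ?thesis by simp
  qed
  have "(\<integral>x. indicator B x * f (Z x) \<partial>M) = (\<integral>x. (\<Sum>z\<in>Z ` space M. f z * indicator {x\<in>space M. x \<in> B \<and> Z x = z} x) \<partial>M)"
    by (rule Bochner_Integration.integral_cong) (auto simp: pw)
  also have "\<dots> = (\<Sum>z\<in>Z ` space M. (\<integral>x. f z * indicator {x\<in>space M. x \<in> B \<and> Z x = z} x \<partial>M))"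
    by (rule Bochner_Integration.integral_sum) (auto simp: lev2 intI)
  also have "\<dots> = (\<Sum>z\<in>Z ` space M. f z * measure M {x\<in>space M. x \<in> B \<and> Z x = z})"
  proof (rule sum.cong)
    fix z
    have "{x\<in>space M. x \<in> B \<and> Z x = z} \<inter> space M = {x\<in>space M. x \<in> B \<and> Z x = z}" by auto
    then show "(\<integral>x. f z * indicator {x\<in>space M. x \<in> B \<and> Z x = z} x \<partial>M) = f z * measure M {x\<in>space M. x \<in> B \<and> Z x = z}"
      by simp
  qed simp
  finally show ?thesis .
qed

definition lawpB :: "'a measure \<Rightarrow> 'a set \<Rightarrow> ('a \<Rightarrow> real) \<Rightarrow> real pmf" where
  "lawpB M B Z = embed_pmf (\<lambda>z. measure M {x\<in>space M. x \<in> B \<and> Z x = z} / measure M B)"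

lemma lawpB:
  fixes Z :: "'a \<Rightarrow> real"
  assumes M: "finite_measure M" and fin: "finite (Z ` space M)"
    and lev: "\<And>z. {x\<in>space M. Z x = z} \<in> sets M" and B: "B \<in> sets M" and pos: "measure M B > 0"
  shows "pmf (lawpB M B Z) z = measure M {x\<in>space M. x \<in> B \<and> Z x = z} / measure M B"
    and "set_pmf (lawpB M B Z) \<subseteq> Z ` space M"
    and "measure_pmf.expectation (lawpB M B Z) f = (\<integral>x. indicator B x * f (Z x) \<partial>M) / measure M B"
proof -
  interpret finite_measure M by fact
  define w where "w z = measure M {x\<in>space M. x \<in> B \<and> Z x = z} / measure M B" for z
  have w0: "\<And>z. 0 \<le> w z" by (simp add: w_def)
  have wout: "w z = 0" if "z \<notin> Z ` space M" for z
  proof -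
    have "{x\<in>space M. x \<in> B \<and> Z x = z} = {}" using that by auto
    then have "measure M {x\<in>space M. x \<in> B \<and> Z x = z} = 0" by (simp only: measure_empty)
    then show ?thesis by (simp add: w_def)
  qed
  have sumw: "(\<Sum>z\<in>Z ` space M. w z) = 1"
  proof -
    have "(\<integral>x. indicator B x * (\<lambda>_. 1::real) (Z x) \<partial>M) = (\<Sum>z\<in>Z ` space M. 1 * measure M {x\<in>space M. x \<in> B \<and> Z x = z})"
      by (rule D0[OF M fin lev B])
    moreover have "(\<integral>x. indicator B x * (\<lambda>_. 1::real) (Z x) \<partial>M) = measure M B"
      using B sets.sets_into_space[OF B] by (simp add: Int_absorb2)
    ultimately have "(\<Sum>z\<in>Z ` space M. measure M {x\<in>space M. x \<in> B \<and> Z x = z}) = measure M B" by simp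
    then show ?thesis using pos by (simp add: w_def sum_divide_distrib[symmetric])
  qed
  have prob: "(\<integral>\<^sup>+z. ennreal (w z) \<partial>count_space UNIV) = 1"
  proof -
    have "(\<integral>\<^sup>+z. ennreal (w z) \<partial>count_space UNIV) = (\<Sum>z\<in>Z ` space M. ennreal (w z))"
      by (rule nn_integral_count_space') (auto simp: fin wout)
    also have "\<dots> = ennreal (\<Sum>z\<in>Z ` space M. w z)" by (rule sum_ennreal) (simp add: w0)
    finally show ?thesis by (simp add: sumw)
  qed
  have pmfw: "pmf (lawpB M B Z) z = w z" for z
    unfolding lawpB_def w_def[symmetric] by (rule pmf_embed_pmf[OF w0 prob])
  then show "pmf (lawpB M B Z) z = measure M {x\<in>space M. x \<in> B \<and> Z x = z} / measure M B"
    by (simp add: w_def)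
  have supp: "set_pmf (lawpB M B Z) \<subseteq> Z ` space M"
  proof
    fix z assume "z \<in> set_pmf (lawpB M B Z)"
    then have "w z \<noteq> 0" by (simp add: set_pmf_iff pmfw)
    then show "z \<in> Z ` space M" using wout by blast
  qed
  then show "set_pmf (lawpB M B Z) \<subseteq> Z ` space M" .
  have "measure_pmf.expectation (lawpB M B Z) f = (\<Sum>z\<in>Z ` space M. f z * pmf (lawpB M B Z) z)"
    by (rule integral_measure_pmf_real) (use fin supp in auto)
  also have "\<dots> = (\<Sum>z\<in>Z ` space M. f z * measure M {x\<in>space M. x \<in> B \<and> Z x = z}) / measure M B"
    by (simp add: pmfw w_def sum_divide_distrib)
  also have "\<dots> = (\<integral>x. indicator B x * f (Z x) \<partial>M) / measure M B"
    by (simp add: D0[OF M fin lev B])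
  finally show "measure_pmf.expectation (lawpB M B Z) f = (\<integral>x. indicator B x * f (Z x) \<partial>M) / measure M B" .
qed

lemma exp_filter:
  fixes f :: "'a \<Rightarrow> real"
  assumes "finite (set_pmf p)"
  shows "measure_pmf.expectation p (\<lambda>\<sigma>. if P \<sigma> then f \<sigma> else 0) = (\<Sum>\<sigma>\<in>{\<sigma>\<in>set_pmf p. P \<sigma>}. pmf p \<sigma> * f \<sigma>)"
proof -
  have "measure_pmf.expectation p (\<lambda>\<sigma>. if P \<sigma> then f \<sigma> else 0) = (\<Sum>\<sigma>\<in>set_pmf p. (if P \<sigma> then f \<sigma> else 0) * pmf p \<sigma>)"
    by (rule integral_measure_pmf_real) (use assms in auto)
  also have "\<dots> = (\<Sum>\<sigma>\<in>set_pmf p. if P \<sigma> then pmf p \<sigma> * f \<sigma> else 0)"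
    by (rule sum.cong) auto
  also have "\<dots> = (\<Sum>\<sigma>\<in>{\<sigma>\<in>set_pmf p. P \<sigma>}. pmf p \<sigma> * f \<sigma>)"
    using assms by (simp add: sum.inter_filter)
  finally show ?thesis .
qed

locale disc =
  fixes P :: "(nat \<Rightarrow> real) measure" and S0 :: real and n :: nat
    and Ks :: "nat \<Rightarrow> real set" and C :: "nat \<Rightarrow> real \<Rightarrow> real"
  assumes PM: "P \<in> M_n S0 n Ks C" and S0pos: "S0 > 0"
    and Ksfin: "\<And>i. i \<in> {1..n} \<Longrightarrow> finite (Ks i) \<and> Ks i \<subseteq> {0..}"
begin

lemma P_prob: "prob_space P" and P_sets: "sets P = sets (state_space n)"
  and P_calls: "calls_fit n Ks C P"
  and P_int: "\<And>i. i \<in> {1..n} \<Longrightarrow> integrable P (\<lambda>x. x i)"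
  and P_mart: "\<And>i. i \<in> {1..n} \<Longrightarrow> AE x in P. real_cond_exp P (past_alg P (i - 1)) (\<lambda>y. y i) x = Spr S0 x (i - 1)"
  using PM by (auto simp: M_n_def)

sublocale prob_space P by (rule P_prob)

lemma P_space: "space P = PiE {1..n} (\<lambda>_. {0::real..})"
  using sets_eq_imp_space_eq[OF P_sets] space_ss by simp

lemma coordP[measurable]: "(\<lambda>x. x j) \<in> borel_measurable P" by (rule coord_meas[OF P_sets])

lemma coord_nonneg: "x \<in> space P \<Longrightarrow> j \<in> {1..n} \<Longrightarrow> 0 \<le> x j"
  by (auto simp: P_space PiE_def Pi_def)

definition G :: "real set" where "G = (\<Union>i\<in>{1..n}. Ks i)"
definition lab :: "real \<Rightarrow> real set" where "lab r = {g\<in>G. g \<le> r}"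
definition Hh :: "nat \<Rightarrow> (nat \<Rightarrow> real) \<Rightarrow> (nat \<Rightarrow> real set)" where "Hh j z = (\<lambda>l\<in>{1..j}. lab (z l))"
definition Hs :: "nat \<Rightarrow> (nat \<Rightarrow> real set) set" where "Hs j = PiE {1..j} (\<lambda>_. Pow G)"
definition Ev :: "nat \<Rightarrow> (nat \<Rightarrow> real set) \<Rightarrow> (nat \<Rightarrow> real) set" where "Ev j h = {x\<in>space P. Hh j x = h}"
definition cc :: "nat \<Rightarrow> (nat \<Rightarrow> real set) \<Rightarrow> real" where
  "cc j h = (\<integral>x. indicator (Ev j h) x * x j \<partial>P) / measure P (Ev j h)"
definition Y :: "nat \<Rightarrow> (nat \<Rightarrow> real) \<Rightarrow> real" where "Y j z = (if j = 0 then S0 else cc j (Hh j z))"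
definition Bset :: "nat \<Rightarrow> real \<Rightarrow> (nat \<Rightarrow> real) set" where "Bset k y = {x\<in>space P. Y k x = y}"

lemma finG: "finite G" unfolding G_def using Ksfin by auto

lemma finHs: "finite (Hs j)" unfolding Hs_def by (intro finite_PiE) (auto simp: finG)

lemma Hh_in: "Hh j z \<in> Hs j" unfolding Hh_def Hs_def lab_def by auto

lemma Hh_eq: "Hh j z = h \<longleftrightarrow> h \<in> Hs j \<and> (\<forall>l\<in>{1..j}. \<forall>g\<in>G. (g \<le> z l) = (g \<in> h l))"
proof
  assume "Hh j z = h"
  then show "h \<in> Hs j \<and> (\<forall>l\<in>{1..j}. \<forall>g\<in>G. (g \<le> z l) = (g \<in> h l))"
    using Hh_in by (auto simp: Hh_def lab_def)
next
  assume h: "h \<in> Hs j \<and> (\<forall>l\<in>{1..j}. \<forall>g\<in>G. (g \<le> z l) = (g \<in> h l))"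
  show "Hh j z = h"
  proof
    fix l show "Hh j z l = h l"
    proof (cases "l \<in> {1..j}")
      case True
      then have "h l \<subseteq> G" using h by (auto simp: Hs_def PiE_def Pi_def)
      then show ?thesis using True h by (auto simp: Hh_def lab_def)
    next
      case False
      then show ?thesis using h by (auto simp: Hh_def Hs_def PiE_def extensional_def)
    qed
  qed
qed

lemma Ev_gen:
  assumes coords: "\<And>l. l \<in> {1..j} \<Longrightarrow> (\<lambda>z. z l) \<in> borel_measurable M"
  shows "{z\<in>space M. Hh j z = h} \<in> sets M"
proof (cases "h \<in> Hs j")
  case True
  have "{z\<in>space M. Hh j z = h} = {z\<in>space M. \<forall>l\<in>{1..j}. \<forall>g\<in>G. (g \<le> z l) = (g \<in> h l)}"
    using True by (auto simp: Hh_eq)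
  also have "\<dots> \<in> sets M"
  proof (rule sets.sets_Collect_finite_All)
    fix l assume l: "l \<in> {1..j}"
    note [measurable] = coords[OF l]
    show "{z\<in>space M. \<forall>g\<in>G. (g \<le> z l) = (g \<in> h l)} \<in> sets M"
    proof (rule sets.sets_Collect_finite_All)
      fix g show "{z\<in>space M. (g \<le> z l) = (g \<in> h l)} \<in> sets M" by measurable
    qed (rule finG)
  qed simp
  finally show ?thesis .
next
  case False
  then have "{z\<in>space M. Hh j z = h} = {}" using Hh_in by auto
  then show ?thesis by (metis sets.empty_sets)
qed

lemma Ev_sets: "Ev j h \<in> sets P"
  unfolding Ev_def by (rule Ev_gen) simp

lemma Y_sum: "j \<noteq> 0 \<Longrightarrow> Y j z = (\<Sum>h\<in>Hs j. indicator {z. Hh j z = h} z * cc j h)"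
proof -
  assume j: "j \<noteq> 0"
  have "(\<Sum>h\<in>Hs j. indicator {z. Hh j z = h} z * cc j h) = (\<Sum>h\<in>Hs j. if h = Hh j z then cc j h else 0)"
    by (rule sum.cong) (auto simp: indicator_def)
  also have "\<dots> = cc j (Hh j z)" using finHs[of j] Hh_in[of j z] by (simp add: sum.delta)
  finally show ?thesis using j by (simp add: Y_def)
qed

lemma Y_meas_gen:
  assumes coords: "\<And>l. l \<in> {1..j} \<Longrightarrow> (\<lambda>z. z l) \<in> borel_measurable M"
  shows "Y j \<in> borel_measurable M"
proof (cases "j = 0")
  case True
  then have "Y j = (\<lambda>_. S0)" by (simp add: fun_eq_iff Y_def)
  then show ?thesis by simp
next
  case False
  have m: "(\<lambda>z. indicator {z. Hh j z = h} z * cc j h) \<in> borel_measurable M" for h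
  proof -
    have "(\<lambda>z. indicator {z \<in> space M. Hh j z = h} z * cc j h) \<in> borel_measurable M"
      using Ev_gen[OF coords] by (intro borel_measurable_times borel_measurable_indicator) auto
    moreover have "\<And>z. z \<in> space M \<Longrightarrow> indicator {z \<in> space M. Hh j z = h} z * cc j h = indicator {z. Hh j z = h} z * cc j h"
      by (auto simp: indicator_def)
    ultimately show ?thesis using measurable_cong by (smt (verit, ccfv_SIG))
  qed
  have "(\<lambda>z. \<Sum>h\<in>Hs j. indicator {z. Hh j z = h} z * cc j h) \<in> borel_measurable M"
    by (rule borel_measurable_sum) (use m in auto)
  moreover have "Y j = (\<lambda>z. \<Sum>h\<in>Hs j. indicator {z. Hh j z = h} z * cc j h)"
    by (rule ext) (rule Y_sum[OF False])
  ultimately show ?thesis by simp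
qed

lemma Y_meas[measurable]: "Y j \<in> borel_measurable P"
  by (rule Y_meas_gen) simp

lemma Hh_restr: "Hh j (restrict x {1..j}) = Hh j x"
  by (auto simp: Hh_def restrict_def fun_eq_iff)

lemma Y_restr: "Y j (restrict x {1..j}) = Y j x"
  by (simp only: Y_def Hh_restr)

lemma Y_restr': "Y j (restrict x {Suc 0..j}) = Y j x"
  using Y_restr[of j x] by simp

lemma Bset_past: "Bset j y \<in> sets (past_alg P j)"
proof -
  let ?M = "\<Pi>\<^sub>M l\<in>{1..j}. (borel :: real measure)"
  have "Y j \<in> borel_measurable ?M" by (rule Y_meas_gen) simp
  then have S: "Y j -` {y} \<inter> space ?M \<in> sets ?M" by (rule measurable_sets) simp
  have "(\<lambda>x. restrict x {1..j}) -` (Y j -` {y} \<inter> space ?M) \<inter> space P \<in> sets (past_alg P j)"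
    unfolding past_alg_def by (rule in_vimage_algebra[OF S])
  moreover have "(\<lambda>x. restrict x {1..j}) -` (Y j -` {y} \<inter> space ?M) \<inter> space P = Bset j y"
    by (auto simp: Bset_def Y_restr' space_PiM)
  ultimately show ?thesis by simp
qed

lemma Bset_sets: "Bset j y \<in> sets P"
  unfolding Bset_def by measurable

lemma Y_fin: "finite (Y j ` space P)"
proof -
  have "Y j ` space P \<subseteq> insert S0 (cc j ` Hs j)" using Hh_in by (auto simp: Y_def)
  then show ?thesis using finHs finite_subset by blast
qed

lemma cc_nonneg: "j \<in> {1..n} \<Longrightarrow> 0 \<le> cc j h"
  unfolding cc_def by (intro divide_nonneg_nonneg integral_nonneg) (auto simp: coord_nonneg indicator_def)

lemma Y_nonneg: "j \<le> n \<Longrightarrow> 0 \<le> Y j x"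
  using S0pos cc_nonneg[of j] by (auto simp: Y_def)

lemma Y_int: "integrable P (Y j)"
proof (rule integrable_const_bound[where B="\<Sum>v\<in>Y j ` space P. \<bar>v\<bar>"])
  show "AE x in P. norm (Y j x) \<le> (\<Sum>v\<in>Y j ` space P. \<bar>v\<bar>)"
  proof (rule AE_I2)
    fix x assume "x \<in> space P"
    then show "norm (Y j x) \<le> (\<Sum>v\<in>Y j ` space P. \<bar>v\<bar>)"
      using Y_fin by (auto intro!: member_le_sum[of "Y j x" _ abs, simplified])
  qed
qed simp

end

context disc begin

lemma intI: "S \<in> sets P \<Longrightarrow> integrable P (indicator S :: _ \<Rightarrow> real)"
  by (rule integrable_const_bound[where B=1]) auto

lemma Ev_int_space[simp]: "Ev j h \<inter> space P = Ev j h"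
  by (auto simp: Ev_def)

declare Ev_sets[measurable]

lemma mart_int:
  assumes i: "i \<in> {1..n}" and B: "B \<in> sets (past_alg P (i - 1))"
  shows "(\<integral>x. indicator B x * x i \<partial>P) = (\<integral>x. indicator B x * Spr S0 x (i - 1) \<partial>P)"
proof -
  interpret F: sigma_finite_subalgebra P "past_alg P (i - 1)" by (rule sfs_past[OF P_prob P_sets])
  have BP[measurable]: "B \<in> sets P" using B F.subalg unfolding subalgebra_def by auto
  note Spr_meas[OF P_sets, measurable]
  have "(\<integral>x. indicator B x * x i \<partial>P) = (\<integral>x. indicator B x * real_cond_exp P (past_alg P (i - 1)) (\<lambda>y. y i) x \<partial>P)"
    by (rule F.real_cond_exp_intg(2)[symmetric]) (use B integrable_mult_indicator[OF BP P_int[OF i]] in auto)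
  also have "\<dots> = (\<integral>x. indicator B x * Spr S0 x (i - 1) \<partial>P)"
    by (rule integral_cong_AE) (use P_mart[OF i] in auto)
  finally show ?thesis .
qed

lemma decomp:
  fixes f :: "(nat \<Rightarrow> real) \<Rightarrow> real"
  assumes f: "integrable P f"
  shows "(\<integral>x. indicator {x\<in>space P. Hh j x \<in> E} x * f x \<partial>P) = (\<Sum>h\<in>Hs j \<inter> E. \<integral>x. indicator (Ev j h) x * f x \<partial>P)"
proof -
  have pw: "indicator {x\<in>space P. Hh j x \<in> E} x * f x = (\<Sum>h\<in>Hs j \<inter> E. indicator (Ev j h) x * f x)"
    if x: "x \<in> space P" for x
  proof -
    have "(\<Sum>h\<in>Hs j \<inter> E. indicator (Ev j h) x * f x) = (\<Sum>h\<in>Hs j \<inter> E. if h = Hh j x then f x else 0)"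
      by (rule sum.cong) (use x in \<open>auto simp: Ev_def\<close>)
    also have "\<dots> = (if Hh j x \<in> Hs j \<inter> E then f x else 0)" using finHs[of j] by (simp add: sum.delta)
    finally show ?thesis using x Hh_in[of j x] by (auto simp: indicator_def)
  qed
  have "(\<integral>x. indicator {x\<in>space P. Hh j x \<in> E} x * f x \<partial>P) = (\<integral>x. (\<Sum>h\<in>Hs j \<inter> E. indicator (Ev j h) x * f x) \<partial>P)"
    by (rule Bochner_Integration.integral_cong) (auto simp: pw)
  also have "\<dots> = (\<Sum>h\<in>Hs j \<inter> E. \<integral>x. indicator (Ev j h) x * f x \<partial>P)"
    by (rule Bochner_Integration.integral_sum) (use integrable_mult_indicator[OF Ev_sets f] in auto)
  finally show ?thesis .
qed

lemma ev_int: "(\<integral>x. indicator (Ev j h) x * x j \<partial>P) = cc j h * measure P (Ev j h)"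
proof (cases "measure P (Ev j h) = 0")
  case True
  have "Ev j h \<in> null_sets P" by (rule null_setsI) (use True Ev_sets in \<open>auto simp: emeasure_eq_measure\<close>)
  then have "AE x in P. x \<notin> Ev j h" by (rule AE_not_in)
  then have "(\<integral>x. indicator (Ev j h) x * x j \<partial>P) = (\<integral>x. 0 \<partial>P)"
    by (intro integral_cong_AE) (auto simp: indicator_def)
  then show ?thesis using True by simp
next
  case False
  then show ?thesis by (simp add: cc_def)
qed

lemma ev_int': "(\<integral>x. x j * indicator (Ev j h) x \<partial>P) = cc j h * measure P (Ev j h)"
  using ev_int[of j h] by (simp add: mult.commute)

lemma ind_const: "(\<integral>x. indicator (Ev j h) x * c \<partial>P) = c * measure P (Ev j h)"
proof -
  have "(\<integral>x. indicator (Ev j h) x * c \<partial>P) = (\<integral>x. indicator (Ev j h) x \<partial>P) * c" by simp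
  also have "\<dots> = c * measure P (Ev j h)"
  proof -
    have "Ev j h \<inter> space P = Ev j h" by (auto simp: Ev_def)
    then show ?thesis by simp
  qed
  finally show ?thesis .
qed

lemma Ycond:
  assumes j: "j \<in> {1..n}"
  shows "(\<integral>x. indicator {x\<in>space P. Hh j x \<in> E} x * Y j x \<partial>P) = (\<integral>x. indicator {x\<in>space P. Hh j x \<in> E} x * x j \<partial>P)"
proof -
  have "(\<integral>x. indicator {x\<in>space P. Hh j x \<in> E} x * Y j x \<partial>P) = (\<Sum>h\<in>Hs j \<inter> E. \<integral>x. indicator (Ev j h) x * Y j x \<partial>P)"
    by (rule decomp[OF Y_int])
  also have "\<dots> = (\<Sum>h\<in>Hs j \<inter> E. \<integral>x. indicator (Ev j h) x * x j \<partial>P)"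
  proof (rule sum.cong)
    fix h
    have "(\<integral>x. indicator (Ev j h) x * Y j x \<partial>P) = (\<integral>x. indicator (Ev j h) x * cc j h \<partial>P)"
      by (rule Bochner_Integration.integral_cong) (use j in \<open>auto simp: indicator_def Ev_def Y_def\<close>)
    also have "\<dots> = (\<integral>x. indicator (Ev j h) x * x j \<partial>P)" by (simp add: ind_const ev_int)
    finally show "(\<integral>x. indicator (Ev j h) x * Y j x \<partial>P) = (\<integral>x. indicator (Ev j h) x * x j \<partial>P)" .
  qed simp
  also have "\<dots> = (\<integral>x. indicator {x\<in>space P. Hh j x \<in> E} x * x j \<partial>P)"
    by (rule decomp[OF P_int[OF j], symmetric])
  finally show ?thesis .
qed

lemma Hh_Suc: "Hh k x = restrict (Hh (Suc k) x) {1..k}"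
  by (auto simp: Hh_def restrict_def fun_eq_iff)

lemma mean:
  assumes j: "j \<in> {1..n}"
  shows "(\<integral>x. indicator (Bset (j - 1) y) x * Y j x \<partial>P) = y * measure P (Bset (j - 1) y)"
proof -
  define k where "k = j - 1"
  have jk: "j = Suc k" using j k_def by auto
  define B where "B = Bset k y"
  have BE: "B = {x\<in>space P. Hh j x \<in> {h. (if k = 0 then S0 else cc k (restrict h {1..k})) = y}}"
    unfolding B_def Bset_def Y_def jk using Hh_Suc[of k] by auto
  have "(\<integral>x. indicator B x * Y j x \<partial>P) = (\<integral>x. indicator B x * x j \<partial>P)"
    unfolding BE by (rule Ycond[OF j])
  also have "\<dots> = (\<integral>x. indicator B x * Spr S0 x k \<partial>P)"
    unfolding k_def by (rule mart_int[OF j]) (simp add: B_def k_def Bset_past)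
  also have "\<dots> = (\<integral>x. indicator B x * Y k x \<partial>P)"
  proof (cases "k = 0")
    case True then show ?thesis by (simp add: Spr_def Y_def)
  next
    case False
    have kn: "k \<in> {1..n}" using False j jk by auto
    have BE': "B = {x\<in>space P. Hh k x \<in> {h. cc k h = y}}"
      unfolding B_def Bset_def Y_def using False by auto
    have "(\<integral>x. indicator B x * Spr S0 x k \<partial>P) = (\<integral>x. indicator B x * x k \<partial>P)"
      using False by (simp add: Spr_def)
    also have "\<dots> = (\<integral>x. indicator B x * Y k x \<partial>P)"
      unfolding BE' by (rule Ycond[OF kn, symmetric])
    finally show ?thesis .
  qed
  also have "\<dots> = (\<integral>x. indicator B x * y \<partial>P)"
    by (rule Bochner_Integration.integral_cong) (auto simp: B_def Bset_def indicator_def)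
  also have "\<dots> = y * measure P B"
    using Bset_sets[of k y] sets.sets_into_space[OF Bset_sets[of k y]] by (simp add: B_def Int_absorb2)
  finally show ?thesis by (simp add: B_def k_def)
qed

lemma maxlem: "(m::real) \<ge> 0 \<Longrightarrow> c * m \<ge> 0 \<Longrightarrow> max c 0 * m = c * m"
  by (cases "m = 0") (auto simp: max_def zero_le_mult_iff)

lemma maxlem2: "(m::real) \<ge> 0 \<Longrightarrow> c * m \<le> 0 \<Longrightarrow> max c 0 * m = 0"
  by (cases "m = 0") (auto simp: max_def mult_le_0_iff)

lemma calls_eq:
  assumes i: "i \<in> {1..n}" and K: "K \<in> Ks i"
  shows "(\<integral>x. max (Y i x - K) 0 \<partial>P) = (\<integral>x. max (x i - K) 0 \<partial>P)"
proof -
  have KG: "K \<in> G" using i K by (auto simp: G_def)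
  have i0: "i \<noteq> 0" using i by auto
  have int1: "integrable P (\<lambda>x. max (Y i x - K) 0)" using Y_int by auto
  have int2: "integrable P (\<lambda>x. max (x i - K) 0)" using P_int[OF i] by auto
  have sp: "(\<integral>x. f x \<partial>P) = (\<integral>x. indicator {x\<in>space P. Hh i x \<in> UNIV} x * f x \<partial>P)" for f :: "_ \<Rightarrow> real"
    by (rule Bochner_Integration.integral_cong) auto
  have per: "(\<integral>x. indicator (Ev i h) x * max (Y i x - K) 0 \<partial>P) = (\<integral>x. indicator (Ev i h) x * max (x i - K) 0 \<partial>P)"
    if h: "h \<in> Hs i" for h
  proof -
    define m where "m = measure P (Ev i h)"
    have m0: "m \<ge> 0" by (simp add: m_def)
    have Kin: "(K \<le> x i) = (K \<in> h i)" if "x \<in> Ev i h" for x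
      using that KG i by (auto simp: Ev_def Hh_eq)
    have D: "(\<integral>x. indicator (Ev i h) x * (x i - K) \<partial>P) = (cc i h - K) * m"
    proof -
      have "(\<integral>x. indicator (Ev i h) x * (x i - K) \<partial>P) = (\<integral>x. indicator (Ev i h) x * x i - indicator (Ev i h) x * K \<partial>P)"
        by (simp add: algebra_simps)
      also have "\<dots> = (\<integral>x. indicator (Ev i h) x * x i \<partial>P) - (\<integral>x. indicator (Ev i h) x * K \<partial>P)"
        by (rule Bochner_Integration.integral_diff)
          (use integrable_mult_indicator[OF Ev_sets[of i h] P_int[OF i]] intI[OF Ev_sets[of i h]] in auto)
      also have "\<dots> = (cc i h - K) * m" by (simp add: ev_int ev_int' ind_const m_def algebra_simps)
      finally show ?thesis .
    qed
    have L: "(\<integral>x. indicator (Ev i h) x * max (Y i x - K) 0 \<partial>P) = max (cc i h - K) 0 * m"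
    proof -
      have "(\<integral>x. indicator (Ev i h) x * max (Y i x - K) 0 \<partial>P) = (\<integral>x. indicator (Ev i h) x * max (cc i h - K) 0 \<partial>P)"
        by (rule Bochner_Integration.integral_cong) (use i0 in \<open>auto simp: indicator_def Ev_def Y_def\<close>)
      then show ?thesis by (simp add: ind_const m_def)
    qed
    show ?thesis
    proof (cases "K \<in> h i")
      case True
      have "(\<integral>x. indicator (Ev i h) x * max (x i - K) 0 \<partial>P) = (\<integral>x. indicator (Ev i h) x * (x i - K) \<partial>P)"
        by (rule Bochner_Integration.integral_cong) (use Kin True in \<open>auto simp: indicator_def\<close>)
      moreover have "(\<integral>x. indicator (Ev i h) x * (x i - K) \<partial>P) \<ge> 0"
        by (rule Bochner_Integration.integral_nonneg) (use Kin True in \<open>auto simp: indicator_def\<close>)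
      ultimately show ?thesis using L D maxlem[OF m0, of "cc i h - K"] by simp
    next
      case False
      have "(\<integral>x. indicator (Ev i h) x * max (x i - K) 0 \<partial>P) = (\<integral>x. 0 \<partial>P)"
      proof (rule Bochner_Integration.integral_cong)
        fix x assume "x \<in> space P"
        show "indicator (Ev i h) x * max (x i - K) 0 = 0"
        proof (cases "x \<in> Ev i h")
          case True
          then have "\<not> K \<le> x i" using Kin False by blast
          then show ?thesis by simp
        qed simp
      qed simp
      moreover have "(\<integral>x. indicator (Ev i h) x * (x i - K) \<partial>P) \<le> 0"
      proof -
        have "(\<integral>x. - (indicator (Ev i h) x * (x i - K)) \<partial>P) \<ge> 0"
        proof (rule Bochner_Integration.integral_nonneg)
          fix x assume "x \<in> space P"
          show "0 \<le> - (indicator (Ev i h) x * (x i - K))"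
          proof (cases "x \<in> Ev i h")
            case True
            then have "\<not> K \<le> x i" using Kin False by blast
            then show ?thesis using True by simp
          qed simp
        qed
        then show ?thesis by simp
      qed
      ultimately show ?thesis using L D maxlem2[OF m0, of "cc i h - K"] by simp
    qed
  qed
  have "(\<integral>x. max (Y i x - K) 0 \<partial>P) = (\<Sum>h\<in>Hs i \<inter> UNIV. \<integral>x. indicator (Ev i h) x * max (Y i x - K) 0 \<partial>P)"
    by (subst sp) (rule decomp[OF int1])
  also have "\<dots> = (\<Sum>h\<in>Hs i \<inter> UNIV. \<integral>x. indicator (Ev i h) x * max (x i - K) 0 \<partial>P)"
    by (rule sum.cong) (auto simp: per)
  also have "\<dots> = (\<integral>x. max (x i - K) 0 \<partial>P)"
    by (subst sp) (rule decomp[OF int2, symmetric])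
  finally show ?thesis .
qed

end

context disc begin

definition nu :: "nat \<Rightarrow> real pmf" where "nu j = lawpB P (space P) (Y j)"
definition TT :: "nat \<Rightarrow> real \<Rightarrow> real pmf" where
  "TT j y = (if measure P (Bset (j - 1) y) > 0 then lawpB P (Bset (j - 1) y) (Y j) else return_pmf y)"

lemma lev: "{x\<in>space P. Y j x = z} \<in> sets P"
  using Bset_sets[of j z] by (simp add: Bset_def)

lemmas lawpBY = lawpB[OF finite_measure_axioms Y_fin lev]

lemma P1: "measure P (space P) = 1" using prob_space by simp

lemma nu_pmf: "pmf (nu j) y = measure P (Bset j y)"
proof -
  have "pmf (nu j) y = measure P {x\<in>space P. x \<in> space P \<and> Y j x = y} / measure P (space P)"
    unfolding nu_def by (rule lawpBY(1)) (auto simp: P1)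
  then show ?thesis by (simp add: Bset_def P1)
qed

lemma nu_supp: "set_pmf (nu j) \<subseteq> Y j ` space P"
  unfolding nu_def by (rule lawpBY(2)) (auto simp: P1)

lemma nu_fin: "finite (set_pmf (nu j))"
  using nu_supp Y_fin finite_subset by blast

lemma nu_exp: "measure_pmf.expectation (nu j) f = (\<integral>x. f (Y j x) \<partial>P)" for f :: "real \<Rightarrow> real"
proof -
  have "measure_pmf.expectation (nu j) f = (\<integral>x. indicator (space P) x * f (Y j x) \<partial>P) / measure P (space P)"
    unfolding nu_def by (rule lawpBY(3)) (auto simp: P1)
  also have "\<dots> = (\<integral>x. f (Y j x) \<partial>P)"
    by (simp add: P1, rule Bochner_Integration.integral_cong) auto
  finally show ?thesis .
qed

lemma nu_nonneg: "j \<le> n \<Longrightarrow> y \<in> set_pmf (nu j) \<Longrightarrow> 0 \<le> y"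
  using nu_supp Y_nonneg by blast

lemma nu0: "nu 0 = return_pmf S0"
proof (rule pmf_eqI)
  fix z
  have "Bset 0 z = (if S0 = z then space P else {})" by (auto simp: Bset_def Y_def)
  then show "pmf (nu 0) z = pmf (return_pmf S0) z" by (simp add: nu_pmf indicator_def P1)
qed

lemma TT_fin: "finite (set_pmf (TT j y))"
proof (cases "measure P (Bset (j - 1) y) > 0")
  case True
  then have "TT j y = lawpB P (Bset (j - 1) y) (Y j)" by (simp add: TT_def)
  moreover have "set_pmf (lawpB P (Bset (j - 1) y) (Y j)) \<subseteq> Y j ` space P"
    by (rule lawpBY(2)[OF Bset_sets True])
  ultimately have "set_pmf (TT j y) \<subseteq> Y j ` space P" by simp
  then show ?thesis using Y_fin finite_subset by blast
next
  case False then show ?thesis by (simp add: TT_def)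
qed

lemma chain:
  assumes "Suc j \<le> n"
  shows "bind_pmf (nu j) (TT (Suc j)) = nu (Suc j)"
proof (rule pmf_eqI)
  fix z
  have trm: "pmf (TT (Suc j) y) z * measure P {x\<in>space P. x \<in> space P \<and> Y j x = y}
      = measure P {x\<in>space P. x \<in> Bset (Suc j) z \<and> Y j x = y}" for y
  proof -
    have e1: "{x\<in>space P. x \<in> space P \<and> Y j x = y} = Bset j y" by (auto simp: Bset_def)
    have e1': "{x\<in>space P. Y j x = y} = Bset j y" by (auto simp: Bset_def)
    have e2: "{x\<in>space P. x \<in> Bset (Suc j) z \<and> Y j x = y} = {x\<in>space P. x \<in> Bset j y \<and> Y (Suc j) x = z}"
      by (auto simp: Bset_def)
    show ?thesis
    proof (cases "measure P (Bset j y) > 0")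
      case True
      have "pmf (TT (Suc j) y) z = measure P {x\<in>space P. x \<in> Bset j y \<and> Y (Suc j) x = z} / measure P (Bset j y)"
        unfolding TT_def using True by (simp add: lawpB[OF finite_measure_axioms Y_fin lev Bset_sets True])
      then show ?thesis using True by (simp add: e1 e1' e2)
    next
      case False
      then have m0: "measure P (Bset j y) = 0" by (simp add: less_le)
      have "measure P {x\<in>space P. x \<in> Bset j y \<and> Y (Suc j) x = z} \<le> measure P (Bset j y)"
        by (rule finite_measure_mono) (auto simp: Bset_sets)
      then have "measure P {x\<in>space P. x \<in> Bset j y \<and> Y (Suc j) x = z} = 0" using m0 by (simp add: antisym)
      then show ?thesis using m0 by (simp add: e1 e1' e2)
    qed
  qed
  have "pmf (bind_pmf (nu j) (TT (Suc j))) z = measure_pmf.expectation (nu j) (\<lambda>y. pmf (TT (Suc j) y) z)"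
    by (rule pmf_bind)
  also have "\<dots> = (\<integral>x. indicator (space P) x * (\<lambda>y. pmf (TT (Suc j) y) z) (Y j x) \<partial>P)"
    by (simp add: nu_exp, rule Bochner_Integration.integral_cong) auto
  also have "\<dots> = (\<Sum>y\<in>Y j ` space P. pmf (TT (Suc j) y) z * measure P {x\<in>space P. x \<in> space P \<and> Y j x = y})"
    by (rule D0[OF finite_measure_axioms Y_fin lev]) simp
  also have "\<dots> = (\<Sum>y\<in>Y j ` space P. (\<lambda>_. 1::real) y * measure P {x\<in>space P. x \<in> Bset (Suc j) z \<and> Y j x = y})"
    using trm by simp
  also have "\<dots> = (\<integral>x. indicator (Bset (Suc j) z) x * (\<lambda>_. 1::real) (Y j x) \<partial>P)"
    by (rule D0[OF finite_measure_axioms Y_fin lev Bset_sets, symmetric])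
  also have "\<dots> = measure P (Bset (Suc j) z)"
  proof -
    have "Bset (Suc j) z \<inter> space P = Bset (Suc j) z" by (auto simp: Bset_def)
    then show ?thesis by simp
  qed
  also have "\<dots> = pmf (nu (Suc j)) z" by (simp add: nu_pmf)
  finally show "pmf (bind_pmf (nu j) (TT (Suc j))) z = pmf (nu (Suc j)) z" .
qed

lemma TT_mean:
  assumes j: "j \<in> {1..n}" and y: "y \<in> set_pmf (nu (j - 1))"
  shows "measure_pmf.expectation (TT j y) (\<lambda>z. z) = y"
proof -
  have pos: "measure P (Bset (j - 1) y) > 0" using y by (simp add: nu_pmf pmf_positive_iff[symmetric])
  have "TT j y = lawpB P (Bset (j - 1) y) (Y j)" using pos by (simp add: TT_def)
  then have "measure_pmf.expectation (TT j y) (\<lambda>z. z) = (\<integral>x. indicator (Bset (j - 1) y) x * Y j x \<partial>P) / measure P (Bset (j - 1) y)"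
    using lawpBY(3)[OF Bset_sets pos, where f="\<lambda>z. z"] by simp
  also have "\<dots> = y" using pos mean[OF j, of y] by simp
  finally show ?thesis .
qed

lemma nu_calls:
  assumes i: "i \<in> {1..n}" and K: "K \<in> Ks i"
  shows "measure_pmf.expectation (nu i) (\<lambda>y. max (y - K) 0) = C i K"
  using calls_eq[OF i K] P_calls i K by (simp add: nu_exp calls_fit_def)

end

lemma sing_gen:
  assumes "\<sigma> \<in> extensional I" "finite I" "\<And>j. j \<in> I \<Longrightarrow> {\<sigma> j} \<in> sets (M j)"
  shows "{\<sigma>} \<in> sets (Pi\<^sub>M I M)"
proof -
  have "{\<sigma>} = PiE I (\<lambda>j. {\<sigma> j})" using assms(1) by (simp add: PiE_singleton)
  then show ?thesis using sets_PiM_I_finite[OF assms(2,3)] by simp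
qed

context disc begin

definition pp :: "(nat \<Rightarrow> real) pmf" where "pp = path TT S0 n"
definition z0 :: "nat \<Rightarrow> real" where "z0 = (\<lambda>j. if j \<in> {1..n} then 0 else undefined)"
definition fx :: "(nat \<Rightarrow> real) \<Rightarrow> (nat \<Rightarrow> real)" where
  "fx \<sigma> = (if \<sigma> \<in> space (state_space n) then \<sigma> else z0)"
definition QQ :: "(nat \<Rightarrow> real) measure" where "QQ = distr (measure_pmf pp) (state_space n) fx"

lemma pp_fin: "finite (set_pmf pp)" unfolding pp_def by (rule path_fin) (rule TT_fin)

lemma marg: "i \<le> n \<Longrightarrow> map_pmf (\<lambda>\<sigma>. Spr S0 \<sigma> i) pp = nu i"
  unfolding pp_def by (rule path_marg[OF nu0 chain]) auto

lemma supp_spr: "\<sigma> \<in> set_pmf pp \<Longrightarrow> i \<le> n \<Longrightarrow> Spr S0 \<sigma> i \<in> set_pmf (nu i)"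
proof -
  assume "\<sigma> \<in> set_pmf pp" "i \<le> n"
  then have "Spr S0 \<sigma> i \<in> set_pmf (map_pmf (\<lambda>\<sigma>. Spr S0 \<sigma> i) pp)" by simp
  then show ?thesis using marg[OF \<open>i \<le> n\<close>] by simp
qed

lemma supp_space: "\<sigma> \<in> set_pmf pp \<Longrightarrow> \<sigma> \<in> space (state_space n)"
proof -
  assume s: "\<sigma> \<in> set_pmf pp"
  have ext: "\<forall>j. j \<notin> {1..n} \<longrightarrow> \<sigma> j = undefined" using path_supp[of \<sigma> TT S0 n] s by (simp add: pp_def)
  have nn: "0 \<le> \<sigma> j" if "j \<in> {1..n}" for j
  proof -
    have "Spr S0 \<sigma> j \<in> set_pmf (nu j)" using supp_spr[OF s] that by auto
    then have "0 \<le> Spr S0 \<sigma> j" using nu_nonneg that by auto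
    then show ?thesis using that by (simp add: Spr_def)
  qed
  show ?thesis using ext nn by (auto simp: space_ss PiE_def extensional_def)
qed

lemma fx_space: "fx \<in> UNIV \<rightarrow> space (state_space n)"
  by (auto simp: fx_def z0_def space_ss PiE_def extensional_def)

lemma fx_id: "\<sigma> \<in> set_pmf pp \<Longrightarrow> fx \<sigma> = \<sigma>"
  using supp_space by (simp add: fx_def)

lemma sing_ss: "\<sigma> \<in> set_pmf pp \<Longrightarrow> {\<sigma>} \<in> sets (state_space n)"
proof -
  assume s: "\<sigma> \<in> set_pmf pp"
  then have sp: "\<sigma> \<in> space (state_space n)" by (rule supp_space)
  show ?thesis unfolding state_space_def
  proof (rule sing_gen)
    show "\<sigma> \<in> extensional {1..n}" using sp by (auto simp: space_ss PiE_def)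
    fix j assume "j \<in> {1..n}"
    then have "\<sigma> j \<ge> 0" using sp by (auto simp: space_ss PiE_def Pi_def)
    then show "{\<sigma> j} \<in> sets (restrict_space borel {0..})" by (subst sets_restrict_space_iff) auto
  qed simp
qed

lemma QQ_prob: "prob_space QQ"
  unfolding QQ_def by (rule measure_pmf.prob_space_distr) (use fx_space in simp)

lemma QQ_sets: "sets QQ = sets (state_space n)" by (simp add: QQ_def)

lemma trans_ratio:
  fixes F :: "(nat \<Rightarrow> real) \<Rightarrow> bool" and G :: "real \<Rightarrow> real"
  assumes i: "i < n" and F: "\<And>\<sigma>. F (restrict \<sigma> {1..i}) \<Longrightarrow> Spr S0 \<sigma> i = y0"
  shows "(\<Sum>\<sigma>\<in>{\<sigma>\<in>set_pmf pp. F (restrict \<sigma> {1..i})}. pmf pp \<sigma> * G (\<sigma> (Suc i)))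
       = measure_pmf.expectation (TT (Suc i) y0) G * (\<Sum>\<sigma>\<in>{\<sigma>\<in>set_pmf pp. F (restrict \<sigma> {1..i})}. pmf pp \<sigma>)"
proof -
  have "(\<Sum>\<sigma>\<in>{\<sigma>\<in>set_pmf pp. F (restrict \<sigma> {1..i})}. pmf pp \<sigma> * G (\<sigma> (Suc i)))
      = measure_pmf.expectation pp (\<lambda>\<sigma>. if F (restrict \<sigma> {1..i}) then G (\<sigma> (Suc i)) else 0)"
    by (rule exp_filter[OF pp_fin, symmetric])
  also have "\<dots> = measure_pmf.expectation pp (\<lambda>\<sigma>. (\<lambda>\<tau>. if F (restrict \<tau> {1..i}) then 1 else 0) (restrict \<sigma> {1..i}) * G (\<sigma> (Suc i)))"
    by (rule Bochner_Integration.integral_cong) auto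
  also have "\<dots> = measure_pmf.expectation pp (\<lambda>\<sigma>. (\<lambda>\<tau>. if F (restrict \<tau> {1..i}) then 1 else 0) (restrict \<sigma> {1..i}) * measure_pmf.expectation (TT (Suc i) (Spr S0 \<sigma> i)) G)"
    unfolding pp_def by (rule path_trans[OF TT_fin i])
  also have "\<dots> = measure_pmf.expectation pp (\<lambda>\<sigma>. if F (restrict \<sigma> {1..i}) then measure_pmf.expectation (TT (Suc i) y0) G else 0)"
    by (rule Bochner_Integration.integral_cong) (auto simp: F)
  also have "\<dots> = (\<Sum>\<sigma>\<in>{\<sigma>\<in>set_pmf pp. F (restrict \<sigma> {1..i})}. pmf pp \<sigma> * measure_pmf.expectation (TT (Suc i) y0) G)"
    by (rule exp_filter[OF pp_fin])
  also have "\<dots> = measure_pmf.expectation (TT (Suc i) y0) G * (\<Sum>\<sigma>\<in>{\<sigma>\<in>set_pmf pp. F (restrict \<sigma> {1..i})}. pmf pp \<sigma>)"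
    by (subst sum_distrib_left) (simp add: mult.commute)
  finally show ?thesis .
qed

lemma den_pos:
  assumes "\<sigma>0 \<in> set_pmf pp" "R \<sigma>0"
  shows "(\<Sum>\<sigma>\<in>{\<sigma>\<in>set_pmf pp. R \<sigma>}. pmf pp \<sigma>) > 0"
proof -
  have "pmf pp \<sigma>0 \<le> (\<Sum>\<sigma>\<in>{\<sigma>\<in>set_pmf pp. R \<sigma>}. pmf pp \<sigma>)"
    by (rule member_le_sum) (use assms pp_fin in auto)
  moreover have "pmf pp \<sigma>0 > 0" using assms by (simp add: pmf_positive)
  ultimately show ?thesis by simp
qed

lemma ratio_lemma:
  fixes F :: "(nat \<Rightarrow> real) \<Rightarrow> bool" and G :: "real \<Rightarrow> real"
  assumes i: "i < n" and F: "\<And>\<sigma>. F (restrict \<sigma> {1..i}) \<Longrightarrow> Spr S0 \<sigma> i = y0"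
    and s0: "\<sigma>0 \<in> set_pmf pp" "F (restrict \<sigma>0 {1..i})"
  shows "(\<Sum>\<sigma>\<in>{\<sigma>\<in>set_pmf pp. F (restrict \<sigma> {1..i})}. pmf pp \<sigma> * G (\<sigma> (Suc i)))
       / (\<Sum>\<sigma>\<in>{\<sigma>\<in>set_pmf pp. F (restrict \<sigma> {1..i})}. pmf pp \<sigma>) = measure_pmf.expectation (TT (Suc i) y0) G"
  using trans_ratio[OF i F, where G=G] den_pos[OF s0(1), of "\<lambda>\<sigma>. F (restrict \<sigma> {1..i})"] s0(2) by simp

end

context disc begin

lemma L1Q:
  assumes "\<phi> \<in> measurable (state_space n) N" "\<And>\<sigma>. \<sigma> \<in> set_pmf pp \<Longrightarrow> {\<phi> \<sigma>} \<in> sets N"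
    "g \<in> borel_measurable (state_space n)"
  shows "AE x in QQ. real_cond_exp QQ (vimage_algebra (space QQ) \<phi> N) g x
     = (\<Sum>\<sigma>\<in>{\<sigma>\<in>set_pmf pp. \<phi> \<sigma> = \<phi> x}. pmf pp \<sigma> * g \<sigma>) / (\<Sum>\<sigma>\<in>{\<sigma>\<in>set_pmf pp. \<phi> \<sigma> = \<phi> x}. pmf pp \<sigma>)"
  unfolding QQ_def by (rule L1[OF pp_fin fx_space fx_id sing_ss assms])

lemma AE_QQ: "(\<And>\<sigma>. \<sigma> \<in> set_pmf pp \<Longrightarrow> R \<sigma>) \<Longrightarrow> AE x in QQ. R x"
  unfolding QQ_def by (rule AE_Q[OF pp_fin fx_space fx_id sing_ss])

lemma intQQ:
  assumes "g \<in> borel_measurable (state_space n)"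
  shows "integrable QQ g" "(\<integral>x. g x \<partial>QQ) = (\<Sum>\<sigma>\<in>set_pmf pp. pmf pp \<sigma> * g \<sigma>)"
  using intQ[OF pp_fin fx_space fx_id assms] unfolding QQ_def by auto

lemma coord_ss[measurable]: "(\<lambda>x. x j) \<in> borel_measurable (state_space n)"
  by (rule coord_meas) simp

lemma QQ_in: "QQ \<in> M_n_Markov S0 n Ks C"
proof -
  have mk: "markov_prop S0 n QQ"
    unfolding markov_prop_def
  proof (intro ballI)
    fix i A assume i: "i \<in> {1..<n}" and A[measurable]: "A \<in> sets (borel :: real measure)"
    define g where "g = (\<lambda>y::nat\<Rightarrow>real. indicator A (y (Suc i)) :: real)"
    have gm: "g \<in> borel_measurable (state_space n)" unfolding g_def by measurable
    have ae1: "AE x in QQ. real_cond_exp QQ (past_alg QQ i) g x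
      = (\<Sum>\<sigma>\<in>{\<sigma>\<in>set_pmf pp. restrict \<sigma> {1..i} = restrict x {1..i}}. pmf pp \<sigma> * g \<sigma>) / (\<Sum>\<sigma>\<in>{\<sigma>\<in>set_pmf pp. restrict \<sigma> {1..i} = restrict x {1..i}}. pmf pp \<sigma>)"
      unfolding past_alg_def
    proof (rule L1Q[OF _ _ gm])
      show "(\<lambda>x. restrict x {1..i}) \<in> state_space n \<rightarrow>\<^sub>M (\<Pi>\<^sub>M j\<in>{1..i}. borel)"
        by (rule restr_meas) simp
      fix \<sigma> show "{restrict \<sigma> {1..i}} \<in> sets (\<Pi>\<^sub>M j\<in>{1..i}. (borel :: real measure))"
        by (rule sing_gen) auto
    qed
    have ae2: "AE x in QQ. real_cond_exp QQ (curr_alg S0 QQ i) g x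
      = (\<Sum>\<sigma>\<in>{\<sigma>\<in>set_pmf pp. Spr S0 \<sigma> i = Spr S0 x i}. pmf pp \<sigma> * g \<sigma>) / (\<Sum>\<sigma>\<in>{\<sigma>\<in>set_pmf pp. Spr S0 \<sigma> i = Spr S0 x i}. pmf pp \<sigma>)"
      unfolding curr_alg_def
      by (rule L1Q[OF _ _ gm]) (auto intro: Spr_meas)
    have ae3: "AE x in QQ. (\<Sum>\<sigma>\<in>{\<sigma>\<in>set_pmf pp. restrict \<sigma> {1..i} = restrict x {1..i}}. pmf pp \<sigma> * g \<sigma>) / (\<Sum>\<sigma>\<in>{\<sigma>\<in>set_pmf pp. restrict \<sigma> {1..i} = restrict x {1..i}}. pmf pp \<sigma>)
       = (\<Sum>\<sigma>\<in>{\<sigma>\<in>set_pmf pp. Spr S0 \<sigma> i = Spr S0 x i}. pmf pp \<sigma> * g \<sigma>) / (\<Sum>\<sigma>\<in>{\<sigma>\<in>set_pmf pp. Spr S0 \<sigma> i = Spr S0 x i}. pmf pp \<sigma>)"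
    proof (rule AE_QQ)
      fix \<sigma>0 assume s0: "\<sigma>0 \<in> set_pmf pp"
      define y0 where "y0 = Spr S0 \<sigma>0 i"
      have iln: "i < n" using i by auto
      have r1: "(\<Sum>\<sigma>\<in>{\<sigma>\<in>set_pmf pp. (\<lambda>\<tau>. \<tau> = restrict \<sigma>0 {1..i}) (restrict \<sigma> {1..i})}. pmf pp \<sigma> * indicator A (\<sigma> (Suc i)))
         / (\<Sum>\<sigma>\<in>{\<sigma>\<in>set_pmf pp. (\<lambda>\<tau>. \<tau> = restrict \<sigma>0 {1..i}) (restrict \<sigma> {1..i})}. pmf pp \<sigma>)
         = measure_pmf.expectation (TT (Suc i) y0) (indicator A)"
      proof (rule ratio_lemma[OF iln _ s0])
        fix \<sigma> assume "restrict \<sigma> {1..i} = restrict \<sigma>0 {1..i}"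
        then have "Spr S0 (restrict \<sigma> {1..i}) i = Spr S0 (restrict \<sigma>0 {1..i}) i" by simp
        then show "Spr S0 \<sigma> i = y0" by (simp add: Spr_restrict' y0_def)
      qed simp
      have r2: "(\<Sum>\<sigma>\<in>{\<sigma>\<in>set_pmf pp. (\<lambda>\<tau>. Spr S0 \<tau> i = y0) (restrict \<sigma> {1..i})}. pmf pp \<sigma> * indicator A (\<sigma> (Suc i)))
         / (\<Sum>\<sigma>\<in>{\<sigma>\<in>set_pmf pp. (\<lambda>\<tau>. Spr S0 \<tau> i = y0) (restrict \<sigma> {1..i})}. pmf pp \<sigma>)
         = measure_pmf.expectation (TT (Suc i) y0) (indicator A)"
      proof (rule ratio_lemma[OF iln _ s0])
        fix \<sigma> assume "Spr S0 (restrict \<sigma> {1..i}) i = y0"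
        then show "Spr S0 \<sigma> i = y0" by (simp add: Spr_restrict')
      qed (simp only: Spr_restrict y0_def)
      show "(\<Sum>\<sigma>\<in>{\<sigma>\<in>set_pmf pp. restrict \<sigma> {1..i} = restrict \<sigma>0 {1..i}}. pmf pp \<sigma> * g \<sigma>) / (\<Sum>\<sigma>\<in>{\<sigma>\<in>set_pmf pp. restrict \<sigma> {1..i} = restrict \<sigma>0 {1..i}}. pmf pp \<sigma>)
       = (\<Sum>\<sigma>\<in>{\<sigma>\<in>set_pmf pp. Spr S0 \<sigma> i = Spr S0 \<sigma>0 i}. pmf pp \<sigma> * g \<sigma>) / (\<Sum>\<sigma>\<in>{\<sigma>\<in>set_pmf pp. Spr S0 \<sigma> i = Spr S0 \<sigma>0 i}. pmf pp \<sigma>)"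
        using r1 r2 by (simp add: g_def y0_def Spr_restrict')
    qed
    show "AE x in QQ. real_cond_exp QQ (past_alg QQ i) (\<lambda>y. indicator A (y (Suc i))) x =
                real_cond_exp QQ (curr_alg S0 QQ i) (\<lambda>y. indicator A (y (Suc i))) x"
      using ae1 ae2 ae3 unfolding g_def by eventually_elim simp
  qed
  have calls: "calls_fit n Ks C QQ"
    unfolding calls_fit_def
  proof (intro ballI conjI)
    fix i K assume i: "i \<in> {1..n}" and K: "K \<in> Ks i"
    have gm: "(\<lambda>x. max (x i - K) 0) \<in> borel_measurable (state_space n)" by measurable
    show "integrable QQ (\<lambda>x. max (x i - K) 0)" by (rule intQQ(1)[OF gm])
    have "(\<integral>x. max (x i - K) 0 \<partial>QQ) = (\<Sum>\<sigma>\<in>set_pmf pp. pmf pp \<sigma> * max (\<sigma> i - K) 0)"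
      by (rule intQQ(2)[OF gm])
    also have "\<dots> = measure_pmf.expectation pp (\<lambda>\<sigma>. max (\<sigma> i - K) 0)"
      by (subst integral_measure_pmf_real[of "set_pmf pp"]) (auto simp: pp_fin mult.commute)
    also have "\<dots> = measure_pmf.expectation (map_pmf (\<lambda>\<sigma>. Spr S0 \<sigma> i) pp) (\<lambda>y. max (y - K) 0)"
      using i by (simp add: Spr_def)
    also have "\<dots> = C i K" using marg[of i] i nu_calls[OF i K] by simp
    finally show "(\<integral>x. max (x i - K) 0 \<partial>QQ) = C i K" .
  qed
  have mart: "integrable QQ (\<lambda>x. x i) \<and>
         (AE x in QQ. real_cond_exp QQ (curr_alg S0 QQ (i - 1)) (\<lambda>y. y i) x = Spr S0 x (i - 1))"
    if i: "i \<in> {1..n}" for i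
  proof
    show "integrable QQ (\<lambda>x. x i)" by (rule intQQ(1)) simp
    define k where "k = i - 1"
    have ik: "i = Suc k" using i k_def by auto
    have kn: "k < n" using i ik by auto
    have ae1: "AE x in QQ. real_cond_exp QQ (curr_alg S0 QQ k) (\<lambda>y. y i) x
      = (\<Sum>\<sigma>\<in>{\<sigma>\<in>set_pmf pp. Spr S0 \<sigma> k = Spr S0 x k}. pmf pp \<sigma> * \<sigma> i) / (\<Sum>\<sigma>\<in>{\<sigma>\<in>set_pmf pp. Spr S0 \<sigma> k = Spr S0 x k}. pmf pp \<sigma>)"
      unfolding curr_alg_def
      by (rule L1Q) (auto intro: Spr_meas)
    have ae2: "AE x in QQ. (\<Sum>\<sigma>\<in>{\<sigma>\<in>set_pmf pp. Spr S0 \<sigma> k = Spr S0 x k}. pmf pp \<sigma> * \<sigma> i) / (\<Sum>\<sigma>\<in>{\<sigma>\<in>set_pmf pp. Spr S0 \<sigma> k = Spr S0 x k}. pmf pp \<sigma>)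
        = Spr S0 x k"
    proof (rule AE_QQ)
      fix \<sigma>0 assume s0: "\<sigma>0 \<in> set_pmf pp"
      define c where "c = Spr S0 \<sigma>0 k"
      have cin: "c \<in> set_pmf (nu k)" unfolding c_def by (rule supp_spr[OF s0]) (use kn in auto)
      have r: "(\<Sum>\<sigma>\<in>{\<sigma>\<in>set_pmf pp. (\<lambda>\<tau>. Spr S0 \<tau> k = c) (restrict \<sigma> {1..k})}. pmf pp \<sigma> * (\<lambda>z. z) (\<sigma> (Suc k)))
         / (\<Sum>\<sigma>\<in>{\<sigma>\<in>set_pmf pp. (\<lambda>\<tau>. Spr S0 \<tau> k = c) (restrict \<sigma> {1..k})}. pmf pp \<sigma>)
         = measure_pmf.expectation (TT (Suc k) c) (\<lambda>z. z)"
      proof (rule ratio_lemma[OF kn _ s0])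
        fix \<sigma> assume "Spr S0 (restrict \<sigma> {1..k}) k = c"
        then show "Spr S0 \<sigma> k = c" by (simp add: Spr_restrict')
      qed (simp only: Spr_restrict c_def)
      have "measure_pmf.expectation (TT (Suc k) c) (\<lambda>z. z) = c"
        using TT_mean[of "Suc k" c] cin i ik by simp
      then show "(\<Sum>\<sigma>\<in>{\<sigma>\<in>set_pmf pp. Spr S0 \<sigma> k = Spr S0 \<sigma>0 k}. pmf pp \<sigma> * \<sigma> i) / (\<Sum>\<sigma>\<in>{\<sigma>\<in>set_pmf pp. Spr S0 \<sigma> k = Spr S0 \<sigma>0 k}. pmf pp \<sigma>)
        = Spr S0 \<sigma>0 k"
        using r by (simp add: ik c_def Spr_restrict')
    qed
    show "AE x in QQ. real_cond_exp QQ (curr_alg S0 QQ (i - 1)) (\<lambda>y. y i) x = Spr S0 x (i - 1)"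
      using ae1 ae2 unfolding k_def by eventually_elim simp
  qed
  show ?thesis
    unfolding M_n_Markov_def using QQ_prob QQ_sets mk calls mart by auto
qed

end

theorem mainTheorem1:
  fixes S0 :: real and n :: nat and t :: "nat \<Rightarrow> real"
    and Ks :: "nat \<Rightarrow> real set" and C :: "nat \<Rightarrow> real \<Rightarrow> real"
  assumes "S0 > 0" and "n \<ge> 1"
    and "0 < t 1" and "\<And>i. 1 \<le> i \<Longrightarrow> i < n \<Longrightarrow> t i < t (Suc i)"
    and "\<And>i. i \<in> {1..n} \<Longrightarrow> finite (Ks i) \<and> Ks i \<subseteq> {0..}"
  shows "M_n_Markov S0 n Ks C \<noteq> {} \<longleftrightarrow> M_n S0 n Ks C \<noteq> {}"
proof
  assume "M_n_Markov S0 n Ks C \<noteq> {}"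
  then obtain Q where "Q \<in> M_n_Markov S0 n Ks C" by blast
  then have "Q \<in> M_n S0 n Ks C" by (rule markov_to_mn)
  then show "M_n S0 n Ks C \<noteq> {}" by blast
next
  assume "M_n S0 n Ks C \<noteq> {}"
  then obtain P where P: "P \<in> M_n S0 n Ks C" by blast
  interpret disc P S0 n Ks C
    by (rule disc.intro[OF P assms(1) assms(5)])
  have "QQ \<in> M_n_Markov S0 n Ks C" by (rule QQ_in)
  then show "M_n_Markov S0 n Ks C \<noteq> {}" by blast
qed

end
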